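(* Let $N,m,d,h$ be natural numbers with $d\geqslant h\geqslant m+2$, and let $c,C,\varepsilon,\eta$ be positive constants; let $\sigma_F,\sigma_G$ be positive parameters. Let $\Xi:\mathbb{R}^h\to\mathbb{R}^d$ be an injective linear map with integer coefficients and $\Xi(\mathbb{Z}^h)=\mathbb{Z}^d\cap\operatorname{im}\Xi$, and $L:\mathbb{R}^h\to\mathbb{R}^m$ a surjective linear map, with $\Vert\Xi\Vert_\infty\leqslant C$, $\Vert L\Vert_\infty\leqslant C$, $\operatorname{dist}(L,V_{\mathrm{rank}}(m,h))\geqslant c$. Let $F:\mathbb{R}^h\to[0,1]$ be a Lipschitz function supported on $[-N,N]^h$ with Lipschitz constant $O(1/(\sigma_FN))$, and $G:\mathbb{R}^m\to[0,1]$ a Lipschitz function supported on $[-\varepsilon,\varepsilon]^m$ with Lipschitz constant $O(1/\sigma_G)$. Let $\widetilde{\mathbf r}\in\mathbb{Z}^d$ with $\Vert\widetilde{\mathbf r}\Vert_\infty=O_{c,C,\varepsilon}(1)$, and let $\chi:\mathbb{R}\to[0,1]$ be an $\eta$-supported measurable function. Then, if $\eta$ is small enough in terms of $m,d,h,C,\varepsilon$, there is a positive real $C_{\Xi,\chi}$ with $C_{\Xi,\chi}\asymp_C1$ such that for all functions $f_1,\dots,f_d:[N]\to[-1,1]$, $$T^{L,\Xi,\widetilde{\mathbf r}}_{F,G,N}(f_1,\dots,f_d)=\frac{1}{C_{\Xi,\chi}\eta^h}\widetilde T^{L,\Xi,\widetilde{\mathbf r}}_{F,G,N}(f_1*\c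hi,\dots,f_d*\chi)+O_{C,c,\varepsilon}(\eta/\sigma_G)+O_{C,c,\varepsilon}(\eta/(\sigma_FN)).$$
   Context: Matrices identified with linear maps; $\Vert\cdot\Vert_\infty$ max absolute entry; $\operatorname{dist}$ $\ell^\infty$ on entries; $V_{\mathrm{rank}}(m,h)$: $m\times h$ matrices of rank $<m$. $\chi$ is $\eta$-supported if it is supported on $[-\eta,\eta]$ and $\chi\equiv1$ on $[-\eta/2,\eta/2]$. For finitely supported $f:\mathbb{Z}\to\mathbb{R}$, $(f*\chi)(x)=\sum_{n\in\mathbb{Z}}f(n)\chi(x-n)$; the $f_j$ are extended by zero to $\mathbb{Z}$. With $\xi_j$ the coordinates of $\Xi$: $T^{L,\Xi,\widetilde{\mathbf r}}_{F,G,N}(f_1,\dots,f_d)=N^{-(h-m)}\sum_{\mathbf n\in\mathbb{Z}^h}\prod_jf_j(\xi_j(\mathbf n)+\widetilde r_j)F(\mathbf n)G(L\mathbf n)$ and, for functions $g_j:\mathbb{R}\to\mathbb{R}$, $\widetilde T^{L,\Xi,\widetilde{\mathbf r}}_{F,G,N}(g_1,\dots,g_d)=N^{-(h-m)}\int_{\mathbb{R}^h}\prod_jg_j(\xi_j(\mathbf x)+\widetilde r_j)F(\mathbf x)G(L\mathbf x)\,d\mathbf x$. Lipschitz constant $M$: $|F(\mathbf x)-F(\mathbf y)|\leqslant M\Vert\mathbf x-\mathbf y\Vert_\infty$. $X\asymp_C1$ means $K^{-1}\leqslant X\leqslant K$ with $K$ depending on $C$ and dimensions; other implied constants may depend on dimensions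 and the listed parameters. *)

theory Defs
  imports "HOL-Analysis.Analysis"
begin

text \<open>Vectors in R^n / Z^n are functions on nat, matrices are nat => nat => real;
  only indices below the dimension matter.\<close>

definition vecs :: "nat \<Rightarrow> (nat \<Rightarrow> real) set" where
  "vecs n = {x. \<forall>k\<ge>n. x k = 0}"

definition ivecs :: "nat \<Rightarrow> (nat \<Rightarrow> real) set" where
  "ivecs n = {x \<in> vecs n. \<forall>k<n. x k \<in> \<int>}"

definition mv :: "nat \<Rightarrow> nat \<Rightarrow> (nat \<Rightarrow> nat \<Rightarrow> real) \<Rightarrow> (nat \<Rightarrow> real) \<Rightarrow> (nat \<Rightarrow> real)" where
  "mv r c A x = (\<lambda>i. if i < r then (\<Sum>k<c. A i k * x k) else 0)"

definition vnorm :: "nat \<Rightarrow> (nat \<Rightarrow> real) \<Rightarrow> real" where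
  "vnorm n x = Max (insert 0 ((\<lambda>k. \<bar>x k\<bar>) ` {..<n}))"

definition mdist :: "nat \<Rightarrow> nat \<Rightarrow> (nat \<Rightarrow> nat \<Rightarrow> real) \<Rightarrow> (nat \<Rightarrow> nat \<Rightarrow> real) \<Rightarrow> real" where
  "mdist r c A B = Max (insert 0 ((\<lambda>(i,k). \<bar>A i k - B i k\<bar>) ` ({..<r} \<times> {..<c})))"

definition lin_indep_cols :: "nat \<Rightarrow> (nat \<Rightarrow> nat \<Rightarrow> real) \<Rightarrow> nat set \<Rightarrow> bool" where
  "lin_indep_cols r M S = (\<forall>a. (\<forall>i<r. (\<Sum>k\<in>S. a k * M i k) = 0) \<longrightarrow> (\<forall>k\<in>S. a k = 0))"

definition mrank :: "nat \<Rightarrow> nat \<Rightarrow> (nat \<Rightarrow> nat \<Rightarrow> real) \<Rightarrow> nat" where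
  "mrank r c M = Max {card S | S. S \<subseteq> {..<c} \<and> lin_indep_cols r M S}"

definition Vrank :: "nat \<Rightarrow> nat \<Rightarrow> (nat \<Rightarrow> nat \<Rightarrow> real) set" where
  "Vrank r c = {M. mrank r c M < r}"

definition zext :: "nat \<Rightarrow> (int \<Rightarrow> real) \<Rightarrow> int \<Rightarrow> real" where
  "zext N f n = (if 1 \<le> n \<and> n \<le> int N then f n else 0)"

definition conv :: "nat \<Rightarrow> (int \<Rightarrow> real) \<Rightarrow> (real \<Rightarrow> real) \<Rightarrow> real \<Rightarrow> real" where
  "conv N f chi x = infsum (\<lambda>n::int. zext N f n * chi (x - of_int n)) UNIV"

definition eta_supported :: "real \<Rightarrow> (real \<Rightarrow> real) \<Rightarrow> bool" where
  "eta_supported \<eta> chi \<longleftrightarrow> (\<forall>x. chi x \<noteq> 0 \<longrightarrow> \<bar>x\<bar> \<le> \<eta>) \<and> (\<forall>x. \<bar>x\<bar> \<le> \<eta>/2 \<longrightarrow> chi x = 1)"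

definition realmat :: "(nat \<Rightarrow> nat \<Rightarrow> int) \<Rightarrow> (nat \<Rightarrow> nat \<Rightarrow> real)" where
  "realmat A = (\<lambda>i k. real_of_int (A i k))"

definition Tcount ::
  "nat \<Rightarrow> nat \<Rightarrow> nat \<Rightarrow> nat \<Rightarrow> (nat \<Rightarrow> nat \<Rightarrow> real) \<Rightarrow> (nat \<Rightarrow> nat \<Rightarrow> int) \<Rightarrow> (nat \<Rightarrow> int)
   \<Rightarrow> ((nat \<Rightarrow> real) \<Rightarrow> real) \<Rightarrow> ((nat \<Rightarrow> real) \<Rightarrow> real) \<Rightarrow> (nat \<Rightarrow> int \<Rightarrow> real) \<Rightarrow> real" where
  "Tcount N m d h L \<Xi> r F G f =
     (1 / real N ^ (h - m)) *
     infsum (\<lambda>n::nat \<Rightarrow> int.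
        (\<Prod>j<d. zext N (f j) ((\<Sum>k<h. \<Xi> j k * n k) + r j))
        * F (\<lambda>k. real_of_int (n k)) * G (mv m h L (\<lambda>k. real_of_int (n k))))
        {n. \<forall>k\<ge>h. n k = 0}"

definition Tint ::
  "nat \<Rightarrow> nat \<Rightarrow> nat \<Rightarrow> nat \<Rightarrow> (nat \<Rightarrow> nat \<Rightarrow> real) \<Rightarrow> (nat \<Rightarrow> nat \<Rightarrow> int) \<Rightarrow> (nat \<Rightarrow> int)
   \<Rightarrow> ((nat \<Rightarrow> real) \<Rightarrow> real) \<Rightarrow> ((nat \<Rightarrow> real) \<Rightarrow> real) \<Rightarrow> (nat \<Rightarrow> real \<Rightarrow> real) \<Rightarrow> real" where
  "Tint N m d h L \<Xi> r F G g =
     (1 / real N ^ (h - m)) *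
     (\<integral>x. (\<Prod>j<d. g j ((\<Sum>k<h. real_of_int (\<Xi> j k) * x k) + real_of_int (r j)))
            * F x * G (mv m h L x) \<partial>(PiM {..<h} (\<lambda>_. lborel)))"

definition Xi_ok :: "nat \<Rightarrow> nat \<Rightarrow> real \<Rightarrow> (nat \<Rightarrow> nat \<Rightarrow> int) \<Rightarrow> bool" where
  "Xi_ok d h C \<Xi> \<longleftrightarrow>
     inj_on (mv d h (realmat \<Xi>)) (vecs h) \<and>
     mv d h (realmat \<Xi>) ` ivecs h = ivecs d \<inter> mv d h (realmat \<Xi>) ` vecs h \<and>
     (\<forall>j<d. \<forall>k<h. \<bar>real_of_int (\<Xi> j k)\<bar> \<le> C)"

definition L_ok :: "nat \<Rightarrow> nat \<Rightarrow> real \<Rightarrow> real \<Rightarrow> (nat \<Rightarrow> nat \<Rightarrow> real) \<Rightarrow> bool" where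
  "L_ok m h c C L \<longleftrightarrow>
     mv m h L ` vecs h = vecs m \<and>
     (\<forall>i<m. \<forall>k<h. \<bar>L i k\<bar> \<le> C) \<and>
     (\<forall>M\<in>Vrank m h. c \<le> mdist m h L M)"

definition F_ok :: "nat \<Rightarrow> nat \<Rightarrow> real \<Rightarrow> real \<Rightarrow> ((nat \<Rightarrow> real) \<Rightarrow> real) \<Rightarrow> bool" where
  "F_ok N h \<sigma> K F \<longleftrightarrow>
     (\<forall>x. 0 \<le> F x \<and> F x \<le> 1) \<and>
     (\<forall>x. F x \<noteq> 0 \<longrightarrow> (\<forall>k<h. \<bar>x k\<bar> \<le> real N)) \<and>
     (\<forall>x y. \<bar>F x - F y\<bar> \<le> K / (\<sigma> * real N) * vnorm h (\<lambda>k. x k - y k))"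

definition G_ok :: "nat \<Rightarrow> real \<Rightarrow> real \<Rightarrow> real \<Rightarrow> ((nat \<Rightarrow> real) \<Rightarrow> real) \<Rightarrow> bool" where
  "G_ok m \<epsilon> \<sigma> K G \<longleftrightarrow>
     (\<forall>x. 0 \<le> G x \<and> G x \<le> 1) \<and>
     (\<forall>x. G x \<noteq> 0 \<longrightarrow> (\<forall>i<m. \<bar>x i\<bar> \<le> \<epsilon>)) \<and>
     (\<forall>x y. \<bar>G x - G y\<bar> \<le> K / \<sigma> * vnorm m (\<lambda>i. x i - y i))"

end

theory Submission
  imports Defs
begin


lemma vnorm_ge: "k < h \<Longrightarrow> \<bar>x k\<bar> \<le> vnorm h x"
  unfolding vnorm_def by (intro Max_ge) auto

lemma vnorm_nonneg: "0 \<le> vnorm h x"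
  unfolding vnorm_def by (intro Max_ge_iff[THEN iffD2]) auto

lemma vnorm_le: "0 \<le> t \<Longrightarrow> (\<And>k. k < h \<Longrightarrow> \<bar>x k\<bar> \<le> t) \<Longrightarrow> vnorm h x \<le> t"
  unfolding vnorm_def by (intro Max.boundedI) auto

lemma vnorm_zero: "(\<And>k. k < h \<Longrightarrow> x k = 0) \<Longrightarrow> vnorm h x = 0"
  using vnorm_le[of 0 h x] vnorm_nonneg[of h x] by auto

lemma lip_measurable:
  fixes \<Phi> :: "(nat \<Rightarrow> real) \<Rightarrow> real"
  assumes lip: "\<And>x y. \<bar>\<Phi> x - \<Phi> y\<bar> \<le> M * vnorm h (\<lambda>k. x k - y k)"
  shows "\<Phi> \<in> borel_measurable (PiM {..<h} (\<lambda>_. lborel))"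
proof -
  define ext where "ext x = (\<lambda>k. if k < h then x k else (0::real))" for x :: "nat \<Rightarrow> real"
  have eq: "\<Phi> x = \<Phi> (ext x)" for x
  proof -
    have "\<bar>\<Phi> x - \<Phi> (ext x)\<bar> \<le> M * vnorm h (\<lambda>k. x k - ext x k)" by (rule lip)
    also have "vnorm h (\<lambda>k. x k - ext x k) = 0" by (rule vnorm_zero) (simp add: ext_def)
    finally show ?thesis by simp
  qed
  have M0: "M \<ge> 0 \<or> (\<forall>x y. \<Phi> x = \<Phi> y)"
  proof (cases "M \<ge> 0")
    case False
    have "\<bar>\<Phi> x - \<Phi> y\<bar> \<le> 0" for x y
      using lip[of x y] vnorm_nonneg[of h "\<lambda>k. x k - y k"] False
      by (smt (verit) mult_nonpos_nonneg)
    then show ?thesis by auto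
  qed auto
  have cont: "continuous_on UNIV \<Phi>"
    unfolding continuous_on_topological
  proof (intro ballI allI impI)
    fix x :: "nat \<Rightarrow> real" and B assume "open B" "\<Phi> x \<in> B"
    then obtain e where e: "e > 0" "ball (\<Phi> x) e \<subseteq> B"
      by (meson openE)
    define \<delta> where "\<delta> = e / (\<bar>M\<bar> + 1)"
    have dpos: "\<delta> > 0" using e by (simp add: \<delta>_def)
    define A where "A = {f. \<forall>i\<in>{..<h}. f (id i) \<in> ball (x i) \<delta>}"
    have "open A" unfolding A_def by (rule product_topology_basis') auto
    moreover have "x \<in> A" using dpos by (auto simp: A_def)
    moreover have "\<Phi> y \<in> B" if "y \<in> A" for y
    proof -
      have "vnorm h (\<lambda>k. y k - x k) \<le> \<delta>"
        using that dpos by (intro vnorm_le) (auto simp: A_def dist_real_def abs_minus_commute intro: less_imp_le)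
      have "\<bar>\<Phi> y - \<Phi> x\<bar> < e"
      proof (cases "M \<ge> 0")
        case True
        have "\<bar>\<Phi> y - \<Phi> x\<bar> \<le> M * vnorm h (\<lambda>k. y k - x k)" by (rule lip)
        also have "\<dots> \<le> M * \<delta>" using True \<open>vnorm h _ \<le> \<delta>\<close> by (intro mult_left_mono) auto
        also have "\<dots> < e" using True e unfolding \<delta>_def by (simp add: field_simps)
        finally show ?thesis .
      next
        case False then have "\<Phi> y = \<Phi> x" using M0 by blast
        then show ?thesis using e by simp
      qed
      then show ?thesis using e by (auto simp: dist_real_def)
    qed
    ultimately show "\<exists>A. open A \<and> x \<in> A \<and> (\<forall>y\<in>UNIV. y \<in> A \<longrightarrow> \<Phi> y \<in> B)" by blast
  qed
  have m1: "ext \<in> borel_measurable (PiM {..<h} (\<lambda>_. lborel))"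
    unfolding ext_def
  proof (rule measurable_coordinatewise_then_product)
    fix i show "(\<lambda>x. if i < h then x i else 0) \<in> borel_measurable (Pi\<^sub>M {..<h} (\<lambda>_. lborel))"
      by (cases "i < h") (auto intro!: measurable_component_singleton simp: measurable_cong_sets[OF refl sets_lborel])
  qed
  have m2: "\<Phi> \<in> borel_measurable borel" by (rule borel_measurable_continuous_onI[OF cont])
  have "(\<lambda>x. \<Phi> (ext x)) \<in> borel_measurable (PiM {..<h} (\<lambda>_. lborel))"
    by (rule measurable_compose[OF m1 m2])
  then show ?thesis using eq by simp
qed


lemma elim_id:
  fixes A :: "nat \<Rightarrow> nat \<Rightarrow> real"
  assumes "finite I" "k1 \<in> I"
  shows "(\<Sum>k\<in>I-{k1}. (A j1 k1 * A j k - A j k1 * A j1 k) * x k)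
       = A j1 k1 * (\<Sum>k\<in>I. A j k * x k) - A j k1 * (\<Sum>k\<in>I. A j1 k * x k)"
proof -
  have a: "(\<Sum>k\<in>I. A j k * x k) = A j k1 * x k1 + (\<Sum>k\<in>I-{k1}. A j k * x k)"
    using assms by (simp add: sum.remove)
  have b: "(\<Sum>k\<in>I. A j1 k * x k) = A j1 k1 * x k1 + (\<Sum>k\<in>I-{k1}. A j1 k * x k)"
    using assms by (simp add: sum.remove)
  show ?thesis unfolding a b
    by (simp add: algebra_simps sum_subtractf sum_distrib_left)
qed

lemma abs_lin2: "\<bar>(p::real) * a - q * b\<bar> \<le> \<bar>p\<bar> * \<bar>a\<bar> + \<bar>q\<bar> * \<bar>b\<bar>"
  by (metis abs_mult abs_triangle_ineq4)

lemma sum_upd_out: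
  assumes "k1 \<notin> I'"
  shows "(\<Sum>k\<in>I'. A k * (x(k1 := v)) k) = (\<Sum>k\<in>I'. A k * x k)"
  using assms by (intro sum.cong) auto

lemma sum_split1:
  assumes "finite I" "k1 \<in> I"
  shows "(\<Sum>k\<in>I. A k * x k) = A k1 * x k1 + (\<Sum>k\<in>I-{k1}. A k * x k)"
  using assms by (simp add: sum.remove)

lemma xi_struct:
  fixes n :: nat
  shows "\<And>C. C \<ge> 1 \<Longrightarrow> \<exists>K \<delta>. K > 0 \<and> \<delta> > 0 \<and>
    (\<forall>(J::nat set) (I::nat set) (A :: nat \<Rightarrow> nat \<Rightarrow> real). finite J \<longrightarrow> finite I \<longrightarrow> card I = n \<longrightarrow>
      (\<forall>j\<in>J. \<forall>k\<in>I. A j k \<in> \<int> \<and> \<bar>A j k\<bar> \<le> C) \<longrightarrow>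
      (\<forall>x. (\<forall>j\<in>J. (\<Sum>k\<in>I. A j k * x k) = 0) \<longrightarrow> (\<forall>k\<in>I. x k = 0)) \<longrightarrow>
      (\<forall>x t. (\<forall>j\<in>J. \<bar>\<Sum>k\<in>I. A j k * x k\<bar> \<le> t) \<longrightarrow> (\<forall>k\<in>I. \<bar>x k\<bar> \<le> K * t)) \<and>
      (\<forall>x b. (\<forall>j\<in>J. b j \<in> \<int> \<and> \<bar>(\<Sum>k\<in>I. A j k * x k) - b j\<bar> \<le> \<delta>) \<longrightarrow>
         (\<exists>y. \<forall>j\<in>J. (\<Sum>k\<in>I. A j k * y k) = b j)))"
proof (induction n)
  case 0
  show ?case
  proof (rule exI[of _ 1], rule exI[of _ "1/2::real"], intro conjI; (rule allI, rule allI, rule allI, (rule impI)+, rule conjI)?)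
    fix J I :: "nat set" and A :: "nat \<Rightarrow> nat \<Rightarrow> real"
    assume "finite J" "finite I" "card I = 0"
      "\<forall>j\<in>J. \<forall>k\<in>I. A j k \<in> \<int> \<and> \<bar>A j k\<bar> \<le> C"
      "\<forall>x. (\<forall>j\<in>J. (\<Sum>k\<in>I. A j k * x k) = 0) \<longrightarrow> (\<forall>k\<in>I. x k = 0)"
    then have I: "I = {}" by simp
    show "\<forall>x t. (\<forall>j\<in>J. \<bar>\<Sum>k\<in>I. A j k * x k\<bar> \<le> t) \<longrightarrow> (\<forall>k\<in>I. \<bar>x k\<bar> \<le> 1 * t)"
      using I by simp
    show "\<forall>x b. (\<forall>j\<in>J. b j \<in> \<int> \<and> \<bar>(\<Sum>k\<in>I. A j k * x k) - b j\<bar> \<le> 1/2) \<longrightarrow>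
         (\<exists>y. \<forall>j\<in>J. (\<Sum>k\<in>I. A j k * y k) = b j)"
    proof (intro allI impI)
      fix x b assume h: "\<forall>j\<in>J. b j \<in> \<int> \<and> \<bar>(\<Sum>k\<in>I. A j k * x k) - b j\<bar> \<le> 1/2"
      have "b j = 0" if j: "j \<in> J" for j
      proof -
        obtain z where z: "b j = of_int z" using h j Ints_cases by blast
        have "\<bar>b j\<bar> \<le> 1/2" using h j I by simp
        then have "\<bar>z\<bar> \<le> 0" using z by simp
        then show ?thesis using z by simp
      qed
      then show "\<exists>y. \<forall>j\<in>J. (\<Sum>k\<in>I. A j k * y k) = b j" using I by simp
    qed
  qed auto
next
  case (Suc n)
  have C2: "2*C*C \<ge> 1" using Suc.prems by (smt (verit) mult_ge1_I)
  from Suc.IH[OF C2] obtain K' \<delta>' :: real where H: "K' > 0 \<and> \<delta>' > 0 \<and> (\<forall>(J::nat set) (I::nat set) (A :: nat \<Rightarrow> nat \<Rightarrow> real). finite J \<longrightarrow> finite I \<longrightarrow> card I = n \<longrightarrow>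
      (\<forall>j\<in>J. \<forall>k\<in>I. A j k \<in> \<int> \<and> \<bar>A j k\<bar> \<le> 2*C*C) \<longrightarrow>
      (\<forall>x. (\<forall>j\<in>J. (\<Sum>k\<in>I. A j k * x k) = 0) \<longrightarrow> (\<forall>k\<in>I. x k = 0)) \<longrightarrow>
      (\<forall>x t. (\<forall>j\<in>J. \<bar>\<Sum>k\<in>I. A j k * x k\<bar> \<le> t) \<longrightarrow> (\<forall>k\<in>I. \<bar>x k\<bar> \<le> K' * t)) \<and>
      (\<forall>x b. (\<forall>j\<in>J. b j \<in> \<int> \<and> \<bar>(\<Sum>k\<in>I. A j k * x k) - b j\<bar> \<le> \<delta>') \<longrightarrow>
         (\<exists>y. \<forall>j\<in>J. (\<Sum>k\<in>I. A j k * y k) = b j)))"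
    by (elim exE) (erule that)
  have K': "K' > 0" "\<delta>' > 0" using H by auto
  note IH = H[THEN conjunct2, THEN conjunct2]
  have C1: "C \<ge> 1" by fact
  define K where "K = 1 + 2*C*K' + 2 * real n * C * C * K'"
  define \<delta> where "\<delta> = \<delta>' / (2*C)"
  show ?case
  proof (rule exI[of _ K], rule exI[of _ \<delta>], intro conjI; (rule allI, rule allI, rule allI, (rule impI)+, rule conjI)?)
    show "K > 0" unfolding K_def using K' C1 by (simp add: add_pos_nonneg)
    show "\<delta> > 0" unfolding \<delta>_def using K' C1 by simp
    fix J I :: "nat set" and A :: "nat \<Rightarrow> nat \<Rightarrow> real"
    assume fJ: "finite J" and fI: "finite I" and cI: "card I = Suc n"
      and Aint: "\<forall>j\<in>J. \<forall>k\<in>I. A j k \<in> \<int> \<and> \<bar>A j k\<bar> \<le> C"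
      and inj: "\<forall>x. (\<forall>j\<in>J. (\<Sum>k\<in>I. A j k * x k) = 0) \<longrightarrow> (\<forall>k\<in>I. x k = 0)"
    obtain k1 where k1: "k1 \<in> I" using cI by (metis card.empty ex_in_conv nat.simps(3))
    have "\<exists>j1\<in>J. A j1 k1 \<noteq> 0"
    proof (rule ccontr)
      assume "\<not> ?thesis"
      then have "\<forall>j\<in>J. (\<Sum>k\<in>I. A j k * (\<lambda>k. if k = k1 then 1 else 0) k) = 0"
        using fI k1 by (simp add: if_distrib sum.delta cong: if_cong)
      then show False using inj k1 by fastforce
    qed
    then obtain j1 where j1: "j1 \<in> J" "A j1 k1 \<noteq> 0" by blast
    define p where "p = A j1 k1"
    have pint: "p \<in> \<int>" using Aint j1 k1 p_def by auto
    have p1: "\<bar>p\<bar> \<ge> 1"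
    proof -
      obtain z where "p = of_int z" using pint Ints_cases by blast
      then show ?thesis using j1 p_def by simp
    qed
    have pC: "\<bar>p\<bar> \<le> C" using Aint j1 k1 p_def by auto
    define I' where "I' = I - {k1}"
    define J' where "J' = J - {j1}"
    define A' where "A' j k = p * A j k - A j k1 * A j1 k" for j k
    have cI': "card I' = n" using cI k1 fI by (simp add: I'_def)
    have fI': "finite I'" "finite J'" using fI fJ by (auto simp: I'_def J'_def)
    have id: "(\<Sum>k\<in>I'. A' j k * x k) = p * (\<Sum>k\<in>I. A j k * x k) - A j k1 * (\<Sum>k\<in>I. A j1 k * x k)" for j x
      unfolding I'_def A'_def p_def by (rule elim_id[OF fI k1])
    have A'int: "\<forall>j\<in>J'. \<forall>k\<in>I'. A' j k \<in> \<int> \<and> \<bar>A' j k\<bar> \<le> 2*C*C"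
    proof (intro ballI conjI)
      fix j k assume j: "j \<in> J'" and k: "k \<in> I'"
      then have jJ: "j \<in> J" and kI: "k \<in> I" by (auto simp: J'_def I'_def)
      show "A' j k \<in> \<int>" unfolding A'_def using Aint jJ kI k1 j1 pint by auto
      have "\<bar>A' j k\<bar> \<le> \<bar>p\<bar> * \<bar>A j k\<bar> + \<bar>A j k1\<bar> * \<bar>A j1 k\<bar>"
        unfolding A'_def by (rule abs_lin2)
      also have "\<dots> \<le> C * C + C * C"
        using Aint jJ kI k1 j1 pC by (intro add_mono mult_mono) auto
      finally show "\<bar>A' j k\<bar> \<le> 2*C*C" by simp
    qed
    have inj': "\<forall>x. (\<forall>j\<in>J'. (\<Sum>k\<in>I'. A' j k * x k) = 0) \<longrightarrow> (\<forall>k\<in>I'. x k = 0)"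
    proof (intro allI impI)
      fix x' assume h: "\<forall>j\<in>J'. (\<Sum>k\<in>I'. A' j k * x' k) = 0"
      define x where "x = x'(k1 := - (\<Sum>k\<in>I'. A j1 k * x' k) / p)"
      have xI': "(\<Sum>k\<in>I'. B k * x k) = (\<Sum>k\<in>I'. B k * x' k)" for B
        unfolding x_def by (rule sum_upd_out) (simp add: I'_def)
      have r1: "(\<Sum>k\<in>I. A j1 k * x k) = 0"
        using sum_split1[OF fI k1, of "A j1" x] xI'[of "A j1"] j1 p_def
        by (simp add: x_def I'_def)
      have "\<forall>j\<in>J. (\<Sum>k\<in>I. A j k * x k) = 0"
      proof
        fix j assume j: "j \<in> J"
        show "(\<Sum>k\<in>I. A j k * x k) = 0"
        proof (cases "j = j1")
          case True then show ?thesis using r1 by simp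
        next
          case False
          then have "j \<in> J'" using j by (simp add: J'_def)
          then have "(\<Sum>k\<in>I'. A' j k * x k) = 0" using h xI' by simp
          then have "p * (\<Sum>k\<in>I. A j k * x k) = 0" using id[of j x] r1 by simp
          then show ?thesis using p1 by auto
        qed
      qed
      then have "\<forall>k\<in>I. x k = 0" using inj by blast
      then show "\<forall>k\<in>I'. x' k = 0" unfolding x_def I'_def by (metis DiffD1 DiffD2 fun_upd_other singletonI)
    qed
    have IH': "(\<forall>x t. (\<forall>j\<in>J'. \<bar>\<Sum>k\<in>I'. A' j k * x k\<bar> \<le> t) \<longrightarrow> (\<forall>k\<in>I'. \<bar>x k\<bar> \<le> K' * t)) \<and>
      (\<forall>x b. (\<forall>j\<in>J'. b j \<in> \<int> \<and> \<bar>(\<Sum>k\<in>I'. A' j k * x k) - b j\<bar> \<le> \<delta>') \<longrightarrow>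
         (\<exists>y. \<forall>j\<in>J'. (\<Sum>k\<in>I'. A' j k * y k) = b j))"
      using IH[THEN spec[of _ J'], THEN spec[of _ I'], THEN spec[of _ A'], THEN mp, THEN mp, THEN mp, THEN mp, THEN mp, OF fI'(2) fI'(1) cI' A'int inj'] .
    show "\<forall>x t. (\<forall>j\<in>J. \<bar>\<Sum>k\<in>I. A j k * x k\<bar> \<le> t) \<longrightarrow> (\<forall>k\<in>I. \<bar>x k\<bar> \<le> K * t)"
    proof (intro allI impI ballI)
      fix x t k assume h: "\<forall>j\<in>J. \<bar>\<Sum>k\<in>I. A j k * x k\<bar> \<le> t" and k: "k \<in> I"
      have t0: "t \<ge> 0" using h j1 by (meson abs_ge_zero order_trans)
      have "\<forall>j\<in>J'. \<bar>\<Sum>k\<in>I'. A' j k * x k\<bar> \<le> 2*C*t"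
      proof
        fix j assume j: "j \<in> J'"
        then have jJ: "j \<in> J" by (simp add: J'_def)
        have "\<bar>\<Sum>k\<in>I'. A' j k * x k\<bar> \<le> \<bar>p\<bar> * \<bar>\<Sum>k\<in>I. A j k * x k\<bar> + \<bar>A j k1\<bar> * \<bar>\<Sum>k\<in>I. A j1 k * x k\<bar>"
          unfolding id by (rule abs_lin2)
        also have "\<dots> \<le> C * t + C * t"
          using h jJ j1 pC Aint k1 by (intro add_mono mult_mono) auto
        finally show "\<bar>\<Sum>k\<in>I'. A' j k * x k\<bar> \<le> 2*C*t" by simp
      qed
      then have xI': "\<forall>k\<in>I'. \<bar>x k\<bar> \<le> K' * (2*C*t)" using IH' by blast
      have KK: "K' * (2*C*t) \<le> K * t"
        unfolding K_def using K' C1 t0 by (simp add: algebra_simps mult_nonneg_nonneg)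
      show "\<bar>x k\<bar> \<le> K * t"
      proof (cases "k = k1")
        case False then have "k \<in> I'" using k by (simp add: I'_def)
        then show ?thesis using xI' KK by (meson order_trans)
      next
        case True
        have E: "p * x k1 = (\<Sum>k\<in>I. A j1 k * x k) - (\<Sum>k\<in>I'. A j1 k * x k)"
          using sum_split1[OF fI k1, of "A j1" x] p_def by (simp add: I'_def)
        have T1: "\<bar>p\<bar> * \<bar>x k1\<bar> = \<bar>(\<Sum>k\<in>I. A j1 k * x k) - (\<Sum>k\<in>I'. A j1 k * x k)\<bar>"
          by (simp only: E[symmetric] abs_mult)
        have T2: "\<bar>(\<Sum>k\<in>I. A j1 k * x k) - (\<Sum>k\<in>I'. A j1 k * x k)\<bar> \<le> \<bar>\<Sum>k\<in>I. A j1 k * x k\<bar> + \<bar>\<Sum>k\<in>I'. A j1 k * x k\<bar>"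
          by (rule abs_triangle_ineq4)
        have "\<bar>\<Sum>k\<in>I'. A j1 k * x k\<bar> \<le> (\<Sum>k\<in>I'. \<bar>A j1 k * x k\<bar>)" by (rule sum_abs)
        also have "\<dots> \<le> (\<Sum>k\<in>I'. C * (K' * (2*C*t)))"
        proof (intro sum_mono)
          fix k assume kk: "k \<in> I'"
          then have "\<bar>A j1 k\<bar> \<le> C" using Aint j1 by (auto simp: I'_def)
          then show "\<bar>A j1 k * x k\<bar> \<le> C * (K' * (2*C*t))"
            using xI' kk unfolding abs_mult by (intro mult_mono) auto
        qed
        also have "\<dots> = real n * C * (K' * (2*C*t))" using cI' by simp
        finally have T3: "\<bar>\<Sum>k\<in>I'. A j1 k * x k\<bar> \<le> real n * C * (K' * (2*C*t))" .
        have "\<bar>\<Sum>k\<in>I. A j1 k * x k\<bar> \<le> t" using h j1 by blast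
        then have "\<bar>p\<bar> * \<bar>x k1\<bar> \<le> t + real n * C * (K' * (2*C*t))"
          using T1 T2 T3 by linarith
        moreover have "\<bar>x k1\<bar> \<le> \<bar>p\<bar> * \<bar>x k1\<bar>" using p1 by (simp add: mult_le_cancel_right1)
        ultimately have "\<bar>x k1\<bar> \<le> t + real n * C * (K' * (2*C*t))" by linarith
        also have "\<dots> \<le> K * t" unfolding K_def using K' C1 t0
          by (simp add: algebra_simps mult_nonneg_nonneg)
        finally show ?thesis using True by simp
      qed
    qed
    show "\<forall>x b. (\<forall>j\<in>J. b j \<in> \<int> \<and> \<bar>(\<Sum>k\<in>I. A j k * x k) - b j\<bar> \<le> \<delta>) \<longrightarrow>
         (\<exists>y. \<forall>j\<in>J. (\<Sum>k\<in>I. A j k * y k) = b j)"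
    proof (intro allI impI)
      fix x b assume h: "\<forall>j\<in>J. b j \<in> \<int> \<and> \<bar>(\<Sum>k\<in>I. A j k * x k) - b j\<bar> \<le> \<delta>"
      define b' where "b' j = p * b j - A j k1 * b j1" for j
      have "\<forall>j\<in>J'. b' j \<in> \<int> \<and> \<bar>(\<Sum>k\<in>I'. A' j k * x k) - b' j\<bar> \<le> \<delta>'"
      proof
        fix j assume j: "j \<in> J'"
        then have jJ: "j \<in> J" by (simp add: J'_def)
        show "b' j \<in> \<int> \<and> \<bar>(\<Sum>k\<in>I'. A' j k * x k) - b' j\<bar> \<le> \<delta>'"
        proof
          show "b' j \<in> \<int>" unfolding b'_def using h jJ j1 pint Aint k1 by auto
          have "(\<Sum>k\<in>I'. A' j k * x k) - b' j = p * ((\<Sum>k\<in>I. A j k * x k) - b j) - A j k1 * ((\<Sum>k\<in>I. A j1 k * x k) - b j1)"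
            unfolding id b'_def by (simp add: algebra_simps)
          then have "\<bar>(\<Sum>k\<in>I'. A' j k * x k) - b' j\<bar> \<le> \<bar>p\<bar> * \<bar>(\<Sum>k\<in>I. A j k * x k) - b j\<bar> + \<bar>A j k1\<bar> * \<bar>(\<Sum>k\<in>I. A j1 k * x k) - b j1\<bar>"
            by (simp only: abs_lin2)
          also have "\<dots> \<le> C * \<delta> + C * \<delta>"
            using h jJ j1 pC Aint k1 by (intro add_mono mult_mono) auto
          also have "\<dots> = \<delta>'" unfolding \<delta>_def using C1 by simp
          finally show "\<bar>(\<Sum>k\<in>I'. A' j k * x k) - b' j\<bar> \<le> \<delta>'" .
        qed
      qed
      then obtain y' where y': "\<forall>j\<in>J'. (\<Sum>k\<in>I'. A' j k * y' k) = b' j" using IH' by blast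
      define y where "y = y'(k1 := (b j1 - (\<Sum>k\<in>I'. A j1 k * y' k)) / p)"
      have yI': "(\<Sum>k\<in>I'. B k * y k) = (\<Sum>k\<in>I'. B k * y' k)" for B
        unfolding y_def by (rule sum_upd_out) (simp add: I'_def)
      have r1: "(\<Sum>k\<in>I. A j1 k * y k) = b j1"
        using sum_split1[OF fI k1, of "A j1" y] yI'[of "A j1"] j1 p_def
        by (simp add: y_def I'_def)
      show "\<exists>y. \<forall>j\<in>J. (\<Sum>k\<in>I. A j k * y k) = b j"
      proof (intro exI[of _ y] ballI)
        fix j assume j: "j \<in> J"
        show "(\<Sum>k\<in>I. A j k * y k) = b j"
        proof (cases "j = j1")
          case True then show ?thesis using r1 by simp
        next
          case False
          then have "j \<in> J'" using j by (simp add: J'_def)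
          then have "(\<Sum>k\<in>I'. A' j k * y k) = b' j" using y' yI' by simp
          then have "p * (\<Sum>k\<in>I. A j k * y k) = p * b j" using id[of j y] r1 by (simp add: b'_def)
          then show ?thesis using p1 by auto
        qed
      qed
    qed
  qed
qed


lemma sum_split1':
  assumes "finite I" "k1 \<in> I"
  shows "(\<Sum>k\<in>I. f k) = f k1 + (\<Sum>k\<in>I-{k1}. f k)"
  using assms by (simp add: sum.remove)

lemma inj_le:
  fixes n :: nat
  shows "\<forall>(J::nat set) (I::nat set) (A :: nat \<Rightarrow> nat \<Rightarrow> real). finite J \<longrightarrow> finite I \<longrightarrow> card I = n \<longrightarrow>
      (\<forall>x. (\<forall>j\<in>J. (\<Sum>k\<in>I. A j k * x k) = 0) \<longrightarrow> (\<forall>k\<in>I. x k = 0)) \<longrightarrow> n \<le> card J"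
proof (induction n)
  case 0 then show ?case by simp
next
  case (Suc n)
  show ?case
  proof (intro allI impI)
    fix J I :: "nat set" and A :: "nat \<Rightarrow> nat \<Rightarrow> real"
    assume fJ: "finite J" and fI: "finite I" and cI: "card I = Suc n"
      and inj: "\<forall>x. (\<forall>j\<in>J. (\<Sum>k\<in>I. A j k * x k) = 0) \<longrightarrow> (\<forall>k\<in>I. x k = 0)"
    obtain k1 where k1: "k1 \<in> I" using cI by (metis card.empty ex_in_conv nat.simps(3))
    have "\<exists>j1\<in>J. A j1 k1 \<noteq> 0"
    proof (rule ccontr)
      assume "\<not> ?thesis"
      then have "\<forall>j\<in>J. (\<Sum>k\<in>I. A j k * (\<lambda>k. if k = k1 then 1 else 0) k) = 0"
        using fI k1 by (simp add: if_distrib sum.delta cong: if_cong)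
      then show False using inj k1 by fastforce
    qed
    then obtain j1 where j1: "j1 \<in> J" "A j1 k1 \<noteq> 0" by blast
    define p where "p = A j1 k1"
    define I' where "I' = I - {k1}"
    define J' where "J' = J - {j1}"
    define A' where "A' j k = p * A j k - A j k1 * A j1 k" for j k
    have cI': "card I' = n" using cI k1 fI by (simp add: I'_def)
    have fI': "finite I'" "finite J'" using fI fJ by (auto simp: I'_def J'_def)
    have id: "(\<Sum>k\<in>I'. A' j k * x k) = p * (\<Sum>k\<in>I. A j k * x k) - A j k1 * (\<Sum>k\<in>I. A j1 k * x k)" for j x
    proof -
      have a: "(\<Sum>k\<in>I. A j k * x k) = A j k1 * x k1 + (\<Sum>k\<in>I'. A j k * x k)"
        unfolding I'_def by (rule sum_split1'[OF fI k1])
      have b: "(\<Sum>k\<in>I. A j1 k * x k) = A j1 k1 * x k1 + (\<Sum>k\<in>I'. A j1 k * x k)"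
        unfolding I'_def by (rule sum_split1'[OF fI k1])
      show ?thesis unfolding a b A'_def p_def
        by (simp add: algebra_simps sum_subtractf sum_distrib_left)
    qed
    have inj': "\<forall>x. (\<forall>j\<in>J'. (\<Sum>k\<in>I'. A' j k * x k) = 0) \<longrightarrow> (\<forall>k\<in>I'. x k = 0)"
    proof (intro allI impI)
      fix x' assume h: "\<forall>j\<in>J'. (\<Sum>k\<in>I'. A' j k * x' k) = 0"
      define x where "x = x'(k1 := - (\<Sum>k\<in>I'. A j1 k * x' k) / p)"
      have xI': "(\<Sum>k\<in>I'. B k * x k) = (\<Sum>k\<in>I'. B k * x' k)" for B
        unfolding x_def by (intro sum.cong) (auto simp: I'_def)
      have r1: "(\<Sum>k\<in>I. A j1 k * x k) = 0"
        using sum_split1'[OF fI k1, of "\<lambda>k. A j1 k * x k"] xI'[of "A j1"] j1 p_def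
        by (simp add: x_def I'_def)
      have "\<forall>j\<in>J. (\<Sum>k\<in>I. A j k * x k) = 0"
      proof
        fix j assume j: "j \<in> J"
        show "(\<Sum>k\<in>I. A j k * x k) = 0"
        proof (cases "j = j1")
          case True then show ?thesis using r1 by simp
        next
          case False
          then have "j \<in> J'" using j by (simp add: J'_def)
          then have "(\<Sum>k\<in>I'. A' j k * x k) = 0" using h xI' by simp
          then have "p * (\<Sum>k\<in>I. A j k * x k) = 0" using id[of j x] r1 by simp
          then show ?thesis using j1 p_def by auto
        qed
      qed
      then have "\<forall>k\<in>I. x k = 0" using inj by blast
      then show "\<forall>k\<in>I'. x' k = 0" unfolding x_def I'_def by (metis DiffD1 DiffD2 fun_upd_other singletonI)
    qed
    have "n \<le> card J'"
      using Suc.IH[THEN spec[of _ J'], THEN spec[of _ I'], THEN spec[of _ A'], THEN mp, THEN mp, THEN mp, THEN mp, OF fI'(2) fI'(1) cI' inj'] .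
    moreover have "card J' = card J - 1" using j1 fJ by (simp add: J'_def)
    moreover have "card J \<ge> 1" using j1 fJ by (metis card_0_eq empty_iff less_one not_le)
    ultimately show "Suc n \<le> card J" by linarith
  qed
qed

definition ibox :: "nat set \<Rightarrow> real \<Rightarrow> (nat \<Rightarrow> int) set" where
  "ibox I N' = {n. (\<forall>k. k \<notin> I \<longrightarrow> n k = 0) \<and> (\<forall>k\<in>I. \<bar>real_of_int (n k)\<bar> \<le> N')}"

lemma card_int_interval:
  assumes "0 \<le> M"
  shows "real (card {v::int. \<bar>real_of_int v - a\<bar> \<le> M}) \<le> 2 * M + 1"
    and "finite {v::int. \<bar>real_of_int v - a\<bar> \<le> M}"
proof -
  have sub: "{v::int. \<bar>real_of_int v - a\<bar> \<le> M} \<subseteq> {\<lceil>a - M\<rceil>..\<lfloor>a + M\<rfloor>}"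
    by (auto simp: abs_le_iff ceiling_le_iff le_floor_iff)
  show "finite {v::int. \<bar>real_of_int v - a\<bar> \<le> M}" by (rule finite_subset[OF sub]) simp
  have "card {v::int. \<bar>real_of_int v - a\<bar> \<le> M} \<le> card {\<lceil>a - M\<rceil>..\<lfloor>a + M\<rfloor>}"
    by (rule card_mono[OF _ sub]) simp
  moreover have "real (card {\<lceil>a - M\<rceil>..\<lfloor>a + M\<rfloor>}) \<le> 2 * M + 1"
  proof -
    have "real (card {\<lceil>a - M\<rceil>..\<lfloor>a + M\<rfloor>}) = real (nat (\<lfloor>a + M\<rfloor> + 1 - \<lceil>a - M\<rceil>))" by simp
    also have "\<dots> \<le> 2 * M + 1"
    proof (cases "\<lfloor>a + M\<rfloor> + 1 - \<lceil>a - M\<rceil> \<ge> 0")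
      case True
      then have "real (nat (\<lfloor>a + M\<rfloor> + 1 - \<lceil>a - M\<rceil>)) = real_of_int \<lfloor>a + M\<rfloor> + 1 - real_of_int \<lceil>a - M\<rceil>" by simp
      also have "\<dots> \<le> (a + M) + 1 - (a - M)" using of_int_floor_le[of "a+M"] le_of_int_ceiling[of "a - M"] by linarith
      finally show ?thesis by simp
    next
      case False then show ?thesis using assms by simp
    qed
    finally show ?thesis .
  qed
  ultimately show "real (card {v::int. \<bar>real_of_int v - a\<bar> \<le> M}) \<le> 2 * M + 1"
    by (meson of_nat_le_iff order_trans)
qed

lemma box_card:
  assumes "finite I" "0 \<le> N'"
  shows "finite (ibox I N') \<and> real (card (ibox I N')) \<le> (2 * N' + 1) ^ card I"
  using assms(1)
proof (induction I rule: finite_induct)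
  case empty
  have "ibox {} N' = {\<lambda>_. 0}" by (auto simp: ibox_def)
  then show ?case by simp
next
  case (insert i I)
  define S where "S = {v::int. \<bar>real_of_int v - 0\<bar> \<le> N'}"
  have S: "finite S" "real (card S) \<le> 2 * N' + 1" using card_int_interval[OF assms(2), of 0] by (auto simp: S_def)
  have sub: "ibox (insert i I) N' \<subseteq> (\<lambda>(g, v). g(i := v)) ` (ibox I N' \<times> S)"
  proof
    fix n assume n: "n \<in> ibox (insert i I) N'"
    have "n(i := 0) \<in> ibox I N'" using n insert.hyps by (auto simp: ibox_def)
    moreover have "n i \<in> S" using n by (auto simp: ibox_def S_def)
    ultimately show "n \<in> (\<lambda>(g, v). g(i := v)) ` (ibox I N' \<times> S)"
      by (intro image_eqI[of _ _ "(n(i := 0), n i)"]) auto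
  qed
  have fin: "finite (ibox I N' \<times> S)" using insert.IH S by simp
  have "card (ibox (insert i I) N') \<le> card ((\<lambda>(g, v). g(i := v)) ` (ibox I N' \<times> S))"
    by (rule card_mono[OF _ sub]) (use fin in simp)
  also have "\<dots> \<le> card (ibox I N' \<times> S)" by (rule card_image_le[OF fin])
  also have "\<dots> = card (ibox I N') * card S" by (simp add: card_cartesian_product)
  finally have "real (card (ibox (insert i I) N')) \<le> real (card (ibox I N')) * real (card S)"
    by (metis of_nat_le_iff of_nat_mult)
  also have "\<dots> \<le> (2 * N' + 1) ^ card I * (2 * N' + 1)"
    using insert.IH S by (intro mult_mono) auto
  also have "\<dots> = (2 * N' + 1) ^ card (insert i I)" using insert.hyps by simp
  finally show ?case using finite_subset[OF sub] fin by auto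
qed

lemma card_fiber:
  assumes "finite A" "\<And>z. card {a\<in>A. g a = z} \<le> M"
  shows "card A \<le> card (g ` A) * M"
proof -
  have "A = (\<Union>z\<in>g ` A. {a\<in>A. g a = z})" by auto
  then have "card A = card (\<Union>z\<in>g ` A. {a\<in>A. g a = z})" by simp
  also have "\<dots> \<le> (\<Sum>z\<in>g ` A. card {a\<in>A. g a = z})" by (rule card_UN_le) (use assms in simp)
  also have "\<dots> \<le> (\<Sum>z\<in>g ` A. M)" by (intro sum_mono assms(2))
  finally show ?thesis by simp
qed


lemma div_bound: "\<bar>a\<bar> \<le> A \<Longrightarrow> c \<le> \<bar>p\<bar> \<Longrightarrow> 0 < (c::real) \<Longrightarrow> \<bar>a / p\<bar> \<le> A / c"
  unfolding abs_divide by (rule frac_le) auto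

lemma count_robust:
  fixes r :: nat
  shows "\<And>c C e. c > 0 \<Longrightarrow> e \<ge> 0 \<Longrightarrow> \<exists>B\<ge>0. \<forall>(R::nat set) (I::nat set) (L::nat\<Rightarrow>nat\<Rightarrow>real) N'.
     finite R \<longrightarrow> finite I \<longrightarrow> card R = r \<longrightarrow> N' \<ge> 0 \<longrightarrow> (\<forall>i\<in>R. \<forall>k\<in>I. \<bar>L i k\<bar> \<le> C) \<longrightarrow>
     (\<forall>y t. t \<ge> 0 \<longrightarrow> (\<forall>k\<in>I. \<bar>\<Sum>i\<in>R. y i * L i k\<bar> \<le> t) \<longrightarrow> (\<forall>i\<in>R. c * \<bar>y i\<bar> \<le> t)) \<longrightarrow>
     finite {n \<in> ibox I N'. \<forall>i\<in>R. \<bar>\<Sum>k\<in>I. L i k * real_of_int (n k)\<bar> \<le> e} \<and>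
     real (card {n \<in> ibox I N'. \<forall>i\<in>R. \<bar>\<Sum>k\<in>I. L i k * real_of_int (n k)\<bar> \<le> e}) \<le> B * (2*N'+1)^(card I - card R)"
proof (induction r)
  case 0
  show ?case
  proof (rule exI[of _ 1], intro conjI allI impI)
    fix R I :: "nat set" and L :: "nat\<Rightarrow>nat\<Rightarrow>real" and N' :: real
    assume "finite R" "finite I" "card R = 0" "N' \<ge> 0"
    then have R: "R = {}" and b: "finite (ibox I N') \<and> real (card (ibox I N')) \<le> (2 * N' + 1) ^ card I"
      using box_card by auto
    show "finite {n \<in> ibox I N'. \<forall>i\<in>R. \<bar>\<Sum>k\<in>I. L i k * real_of_int (n k)\<bar> \<le> e}"
      using b R by simp
    show "real (card {n \<in> ibox I N'. \<forall>i\<in>R. \<bar>\<Sum>k\<in>I. L i k * real_of_int (n k)\<bar> \<le> e}) \<le> 1 * (2*N'+1)^(card I - card R)"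
      using b R by simp
  qed simp
next
  case (Suc r)
  define C' where "C' = \<bar>C\<bar> + \<bar>C\<bar> * \<bar>C\<bar> / c"
  define e' where "e' = e + \<bar>C\<bar> / c * e"
  have e'0: "e' \<ge> 0" unfolding e'_def using Suc.prems by simp
  from Suc.IH[OF Suc.prems(1) e'0, of C'] obtain B' where H: "B' \<ge> 0 \<and> (\<forall>(R::nat set) (I::nat set) (L::nat\<Rightarrow>nat\<Rightarrow>real) N'.
     finite R \<longrightarrow> finite I \<longrightarrow> card R = r \<longrightarrow> N' \<ge> 0 \<longrightarrow> (\<forall>i\<in>R. \<forall>k\<in>I. \<bar>L i k\<bar> \<le> C') \<longrightarrow>
     (\<forall>y t. t \<ge> 0 \<longrightarrow> (\<forall>k\<in>I. \<bar>\<Sum>i\<in>R. y i * L i k\<bar> \<le> t) \<longrightarrow> (\<forall>i\<in>R. c * \<bar>y i\<bar> \<le> t)) \<longrightarrow>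
     finite {n \<in> ibox I N'. \<forall>i\<in>R. \<bar>\<Sum>k\<in>I. L i k * real_of_int (n k)\<bar> \<le> e'} \<and>
     real (card {n \<in> ibox I N'. \<forall>i\<in>R. \<bar>\<Sum>k\<in>I. L i k * real_of_int (n k)\<bar> \<le> e'}) \<le> B' * (2*N'+1)^(card I - card R))"
    by (elim exE) (erule that)
  have B'0: "B' \<ge> 0" using H by simp
  note IH = H[THEN conjunct2]
  have c0: "c > 0" and e0: "e \<ge> 0" by fact+
  show ?case
  proof (rule exI[of _ "B' * (4 * e / c + 1)"], intro conjI allI impI)
    show "B' * (4 * e / c + 1) \<ge> 0" using B'0 c0 e0 by simp
    fix R I :: "nat set" and L :: "nat\<Rightarrow>nat\<Rightarrow>real" and N' :: real
    assume fR: "finite R" and fI: "finite I" and cR: "card R = Suc r" and N0: "N' \<ge> 0"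
      and LC: "\<forall>i\<in>R. \<forall>k\<in>I. \<bar>L i k\<bar> \<le> C"
      and rob: "\<forall>y t. t \<ge> 0 \<longrightarrow> (\<forall>k\<in>I. \<bar>\<Sum>i\<in>R. y i * L i k\<bar> \<le> t) \<longrightarrow> (\<forall>i\<in>R. c * \<bar>y i\<bar> \<le> t)"
    define Q where "Q = {n \<in> ibox I N'. \<forall>i\<in>R. \<bar>\<Sum>k\<in>I. L i k * real_of_int (n k)\<bar> \<le> e}"
    obtain i1 where i1: "i1 \<in> R" using cR by (metis card.empty ex_in_conv nat.simps(3))
    have "\<exists>k1\<in>I. c \<le> \<bar>L i1 k1\<bar>"
    proof (rule ccontr)
      assume "\<not> ?thesis"
      then have lt: "\<forall>k\<in>I. \<bar>L i1 k\<bar> < c" by auto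
      define t where "t = Max (insert 0 ((\<lambda>k. \<bar>L i1 k\<bar>) ` I))"
      have t0: "t \<ge> 0" unfolding t_def using fI by (intro Max_ge) auto
      have tc: "t < c" unfolding t_def using fI lt c0 by (subst Max_less_iff) auto
      have "\<forall>k\<in>I. \<bar>\<Sum>i\<in>R. (\<lambda>i. if i = i1 then 1 else 0) i * L i k\<bar> \<le> t"
      proof
        fix k assume k: "k \<in> I"
        have "(\<Sum>i\<in>R. (\<lambda>i. if i = i1 then 1 else 0) i * L i k) = L i1 k"
        proof -
          have "(\<Sum>i\<in>R. (\<lambda>i. if i = i1 then 1 else 0) i * L i k) = (\<Sum>i\<in>R. if i = i1 then L i k else 0)"
            by (rule sum.cong) auto
          then show ?thesis using fR i1 by simp
        qed
        moreover have "\<bar>L i1 k\<bar> \<le> t" unfolding t_def using fI k by (intro Max_ge) auto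
        ultimately show "\<bar>\<Sum>i\<in>R. (\<lambda>i. if i = i1 then 1 else 0) i * L i k\<bar> \<le> t" by simp
      qed
      then have "\<forall>i\<in>R. c * \<bar>(\<lambda>i. if i = i1 then (1::real) else 0) i\<bar> \<le> t"
        using rob[THEN spec[of _ "\<lambda>i. if i = i1 then (1::real) else 0"], THEN spec[of _ t], THEN mp, OF t0, THEN mp] by blast
      then have "c * \<bar>(\<lambda>i. if i = i1 then (1::real) else 0) i1\<bar> \<le> t" using i1 by blast
      then show False using tc by simp
    qed
    then obtain k1 where k1: "k1 \<in> I" "c \<le> \<bar>L i1 k1\<bar>" by blast
    define p where "p = L i1 k1"
    have pc: "c \<le> \<bar>p\<bar>" and p0: "p \<noteq> 0" using k1 c0 p_def by auto
    define I' where "I' = I - {k1}"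
    define R' where "R' = R - {i1}"
    define L' where "L' i k = L i k - (L i k1 / p) * L i1 k" for i k
    have cR': "card R' = r" using cR i1 fR by (simp add: R'_def)
    have fI': "finite I'" "finite R'" using fI fR by (auto simp: I'_def R'_def)
    have cI1: "card I \<ge> 1" using k1 fI by (metis card_0_eq empty_iff less_one not_le)
    have exp: "card I' - card R' = card I - card R" using cR cI1 k1 fI cR' by (simp add: I'_def)
    have C0: "\<bar>C\<bar> \<ge> 0" by simp
    have L'C: "\<forall>i\<in>R'. \<forall>k\<in>I'. \<bar>L' i k\<bar> \<le> C'"
    proof (intro ballI)
      fix i k assume i: "i \<in> R'" and k: "k \<in> I'"
      then have iR: "i \<in> R" and kI: "k \<in> I" by (auto simp: R'_def I'_def)
      have a1: "\<bar>L i k\<bar> \<le> \<bar>C\<bar>" "\<bar>L i k1\<bar> \<le> \<bar>C\<bar>" "\<bar>L i1 k\<bar> \<le> \<bar>C\<bar>"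
        by (meson LC iR kI k1(1) i1 abs_ge_self order_trans)+
      have "\<bar>L i k1 / p\<bar> \<le> \<bar>C\<bar> / c"
        using a1(2) pc c0 by (rule div_bound)
      then have "\<bar>(L i k1 / p) * L i1 k\<bar> \<le> \<bar>C\<bar> / c * \<bar>C\<bar>"
        unfolding abs_mult using a1(3) c0 by (intro mult_mono) auto
      moreover have "\<bar>L i k - L i k1 / p * L i1 k\<bar> \<le> \<bar>L i k\<bar> + \<bar>L i k1 / p * L i1 k\<bar>" by (rule abs_triangle_ineq4)
      moreover have "\<bar>C\<bar> / c * \<bar>C\<bar> = \<bar>C\<bar> * \<bar>C\<bar> / c" by simp
      ultimately show "\<bar>L' i k\<bar> \<le> C'" unfolding L'_def C'_def using a1(1) by linarith
    qed
    have rob': "\<forall>y t. t \<ge> 0 \<longrightarrow> (\<forall>k\<in>I'. \<bar>\<Sum>i\<in>R'. y i * L' i k\<bar> \<le> t) \<longrightarrow> (\<forall>i\<in>R'. c * \<bar>y i\<bar> \<le> t)"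
    proof (intro allI impI ballI)
      fix y' t i assume t0: "t \<ge> 0" and h: "\<forall>k\<in>I'. \<bar>\<Sum>i\<in>R'. y' i * L' i k\<bar> \<le> t" and i: "i \<in> R'"
      define y where "y = y'(i1 := - (\<Sum>i\<in>R'. y' i * L i k1) / p)"
      have yR': "(\<Sum>i\<in>R'. y i * B i) = (\<Sum>i\<in>R'. y' i * B i)" for B
        unfolding y_def by (intro sum.cong) (auto simp: R'_def)
      have idy: "(\<Sum>i\<in>R. y i * L i k) = (\<Sum>i\<in>R'. y' i * L' i k)" for k
      proof -
        have "(\<Sum>i\<in>R. y i * L i k) = y i1 * L i1 k + (\<Sum>i\<in>R'. y' i * L i k)"
          unfolding R'_def using sum_split1'[OF fR i1, of "\<lambda>i. y i * L i k"] yR'[of "\<lambda>i. L i k"]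
          by (simp add: R'_def)
        also have "\<dots> = (\<Sum>i\<in>R'. y' i * L' i k)"
          unfolding y_def L'_def using p0
          by (simp add: algebra_simps sum_subtractf sum_distrib_left sum_distrib_right sum_divide_distrib)
        finally show ?thesis .
      qed
      have "\<forall>k\<in>I. \<bar>\<Sum>i\<in>R. y i * L i k\<bar> \<le> t"
      proof
        fix k assume k: "k \<in> I"
        show "\<bar>\<Sum>i\<in>R. y i * L i k\<bar> \<le> t"
        proof (cases "k = k1")
          case True
          have "L' i k1 = 0" for i unfolding L'_def p_def using p0 p_def by simp
          then show ?thesis using True idy t0 by simp
        next
          case False
          then have "k \<in> I'" using k by (simp add: I'_def)
          then show ?thesis using h idy by simp
        qed
      qed
      then have "\<forall>i\<in>R. c * \<bar>y i\<bar> \<le> t" using rob t0 by blast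
      moreover have "y i = y' i" using i unfolding y_def R'_def by auto
      ultimately show "c * \<bar>y' i\<bar> \<le> t" using i by (auto simp: R'_def)
    qed
    define Q' where "Q' = {n \<in> ibox I' N'. \<forall>i\<in>R'. \<bar>\<Sum>k\<in>I'. L' i k * real_of_int (n k)\<bar> \<le> e'}"
    have IHQ: "finite Q' \<and> real (card Q') \<le> B' * (2*N'+1)^(card I' - card R')"
      unfolding Q'_def
      using IH[THEN spec[of _ R'], THEN spec[of _ I'], THEN spec[of _ L'], THEN spec[of _ N'],
          THEN mp, THEN mp, THEN mp, THEN mp, THEN mp, THEN mp, OF fI'(2) fI'(1) cR' N0 L'C rob'] .
    have fQ: "finite Q"
    proof -
      have "finite (ibox I N')" using box_card[OF fI N0] by simp
      then show ?thesis unfolding Q_def by simp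
    qed
    define g where "g n = n(k1 := 0)" for n :: "nat \<Rightarrow> int"
    have idL: "(\<Sum>k\<in>I'. L' i k * x k) = (\<Sum>k\<in>I. L i k * x k) - (L i k1 / p) * (\<Sum>k\<in>I. L i1 k * x k)" for i x
    proof -
      have a: "(\<Sum>k\<in>I. L i k * x k) = L i k1 * x k1 + (\<Sum>k\<in>I'. L i k * x k)"
        unfolding I'_def by (rule sum_split1'[OF fI k1(1)])
      have b: "(\<Sum>k\<in>I. L i1 k * x k) = L i1 k1 * x k1 + (\<Sum>k\<in>I'. L i1 k * x k)"
        unfolding I'_def by (rule sum_split1'[OF fI k1(1)])
      show ?thesis unfolding a b L'_def p_def using p0 p_def
        by (simp add: algebra_simps sum_subtractf sum_distrib_left)
    qed
    have gQ: "g ` Q \<subseteq> Q'"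
    proof
      fix z assume "z \<in> g ` Q"
      then obtain n where n: "n \<in> Q" and z: "z = g n" by blast
      have zI': "(\<Sum>k\<in>I'. B k * real_of_int (z k)) = (\<Sum>k\<in>I'. B k * real_of_int (n k))" for B
        unfolding z g_def by (intro sum.cong) (auto simp: I'_def)
      have "z \<in> ibox I' N'" using n unfolding z g_def Q_def ibox_def I'_def by auto
      moreover have "\<forall>i\<in>R'. \<bar>\<Sum>k\<in>I'. L' i k * real_of_int (z k)\<bar> \<le> e'"
      proof
        fix i assume i: "i \<in> R'"
        then have iR: "i \<in> R" by (simp add: R'_def)
        have s1: "\<bar>\<Sum>k\<in>I. L i k * real_of_int (n k)\<bar> \<le> e" "\<bar>\<Sum>k\<in>I. L i1 k * real_of_int (n k)\<bar> \<le> e"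
          using n iR i1 by (auto simp: Q_def)
        have "\<bar>L i k1\<bar> \<le> \<bar>C\<bar>" by (meson LC iR k1(1) abs_ge_self order_trans)
        then have "\<bar>L i k1 / p\<bar> \<le> \<bar>C\<bar> / c"
          using pc c0 by (rule div_bound)
        then have s2: "\<bar>(L i k1 / p) * (\<Sum>k\<in>I. L i1 k * real_of_int (n k))\<bar> \<le> \<bar>C\<bar> / c * e"
          unfolding abs_mult using s1(2) c0 by (intro mult_mono) auto
        show "\<bar>\<Sum>k\<in>I'. L' i k * real_of_int (z k)\<bar> \<le> e'"
          unfolding zI' idL e'_def using s1(1) s2 by linarith
      qed
      ultimately show "z \<in> Q'" unfolding Q'_def by blast
    qed
    have fiber: "card {n\<in>Q. g n = z} \<le> nat \<lfloor>4 * e / c + 1\<rfloor>" for z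
    proof -
      define s where "s = (\<Sum>k\<in>I'. L i1 k * real_of_int (z k))"
      define V where "V = {v::int. \<bar>real_of_int v - (- s / p)\<bar> \<le> e / \<bar>p\<bar>}"
      have inj: "inj_on (\<lambda>n. n k1) {n\<in>Q. g n = z}"
      proof (rule inj_onI)
        fix a b assume a: "a \<in> {n\<in>Q. g n = z}" and b: "b \<in> {n\<in>Q. g n = z}" and ab: "a k1 = b k1"
        have "a = (g a)(k1 := a k1)" "b = (g b)(k1 := b k1)" by (auto simp: g_def)
        then show "a = b" using a b ab by auto
      qed
      have img: "(\<lambda>n. n k1) ` {n\<in>Q. g n = z} \<subseteq> V"
      proof
        fix v assume "v \<in> (\<lambda>n. n k1) ` {n\<in>Q. g n = z}"
        then obtain n where n: "n \<in> Q" "g n = z" and v: "v = n k1" by blast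
        have "(\<Sum>k\<in>I'. L i1 k * real_of_int (n k)) = s"
          unfolding s_def n(2)[symmetric] g_def by (intro sum.cong) (auto simp: I'_def)
        then have "(\<Sum>k\<in>I. L i1 k * real_of_int (n k)) = p * real_of_int v + s"
          using sum_split1'[OF fI k1(1), of "\<lambda>k. L i1 k * real_of_int (n k)"] v p_def by (simp add: I'_def)
        moreover have "\<bar>\<Sum>k\<in>I. L i1 k * real_of_int (n k)\<bar> \<le> e" using n i1 by (auto simp: Q_def)
        ultimately have "\<bar>p * real_of_int v + s\<bar> \<le> e" by simp
        moreover have "p * real_of_int v + s = p * (real_of_int v - (- s / p))" using p0 by (simp add: field_simps)
        ultimately have "\<bar>p\<bar> * \<bar>real_of_int v - (- s / p)\<bar> \<le> e" by (simp add: abs_mult)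
        then have "\<bar>real_of_int v - (- s / p)\<bar> \<le> e / \<bar>p\<bar>" using p0 by (simp add: field_simps)
        then show "v \<in> V" by (simp add: V_def)
      qed
      have Ve: "0 \<le> e / \<bar>p\<bar>" using e0 by simp
      have fV: "finite V" unfolding V_def by (rule card_int_interval(2)[OF Ve])
      have "card {n\<in>Q. g n = z} = card ((\<lambda>n. n k1) ` {n\<in>Q. g n = z})" using inj by (simp add: card_image)
      also have "\<dots> \<le> card V" by (rule card_mono[OF fV img])
      finally have "real (card {n\<in>Q. g n = z}) \<le> 2 * (e / \<bar>p\<bar>) + 1"
        using card_int_interval(1)[OF Ve, of "- s / p"] unfolding V_def by (meson of_nat_le_iff order_trans)
      also have "\<dots> \<le> 4 * e / c + 1"
      proof -
        have "e / \<bar>p\<bar> \<le> e / c" using pc c0 e0 by (simp add: frac_le)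
        moreover have "0 \<le> e / c" using e0 c0 by simp
        moreover have "2 * (e / \<bar>p\<bar>) = 2 * e / \<bar>p\<bar>" "4 * e / c = 4 * (e / c)" by simp_all
        ultimately show ?thesis by linarith
      qed
      finally show ?thesis by linarith
    qed
    have "card Q \<le> card (g ` Q) * nat \<lfloor>4 * e / c + 1\<rfloor>" by (rule card_fiber[OF fQ fiber])
    also have "\<dots> \<le> card Q' * nat \<lfloor>4 * e / c + 1\<rfloor>"
      using IHQ gQ by (intro mult_right_mono card_mono) auto
    finally have "real (card Q) \<le> real (card Q') * real (nat \<lfloor>4 * e / c + 1\<rfloor>)"
      by (metis of_nat_le_iff of_nat_mult)
    also have "\<dots> \<le> B' * (2*N'+1)^(card I' - card R') * (4 * e / c + 1)"
    proof (rule mult_mono)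
      show "real (nat \<lfloor>4 * e / c + 1\<rfloor>) \<le> 4 * e / c + 1" using e0 c0
        by (simp add: divide_nonneg_nonneg)
    qed (use IHQ B'0 N0 in auto)
    finally show "real (card {n \<in> ibox I N'. \<forall>i\<in>R. \<bar>\<Sum>k\<in>I. L i k * real_of_int (n k)\<bar> \<le> e}) \<le> B' * (4 * e / c + 1) * (2*N'+1)^(card I - card R)"
      unfolding Q_def exp by (simp add: algebra_simps)
    show "finite {n \<in> ibox I N'. \<forall>i\<in>R. \<bar>\<Sum>k\<in>I. L i k * real_of_int (n k)\<bar> \<le> e}"
      using fQ unfolding Q_def .
  qed
qed


lemma L_robust:
  assumes Lok: "L_ok m h c C L" and c0: "c > 0"
  shows "\<forall>y t. t \<ge> 0 \<longrightarrow> (\<forall>k\<in>{..<h}. \<bar>\<Sum>i\<in>{..<m}. y i * L i k\<bar> \<le> t) \<longrightarrow> (\<forall>i\<in>{..<m}. c * \<bar>y i\<bar> \<le> t)"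
proof (intro allI impI ballI)
  fix y t i assume t0: "t \<ge> 0" and h: "\<forall>k\<in>{..<h}. \<bar>\<Sum>i\<in>{..<m}. y i * L i k\<bar> \<le> t" and i: "i \<in> {..<m}"
  define s where "s = Max ((\<lambda>i. \<bar>y i\<bar>) ` {..<m})"
  have ne: "(\<lambda>i. \<bar>y i\<bar>) ` {..<m} \<noteq> {}" using i by auto
  have "s \<in> (\<lambda>i. \<bar>y i\<bar>) ` {..<m}" unfolding s_def using ne by (intro Max_in) auto
  then obtain i0 where i0: "i0 < m" "\<bar>y i0\<bar> = s" by auto
  have yi: "\<bar>y i\<bar> \<le> s" unfolding s_def using i by (intro Max_ge) auto
  show "c * \<bar>y i\<bar> \<le> t"
  proof (cases "s = 0")
    case True then show ?thesis using yi t0 by simp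
  next
    case False
    then have y0: "y i0 \<noteq> 0" and spos: "s > 0" using i0 by auto
    define w where "w k = (\<Sum>i\<in>{..<m}. y i * L i k)" for k
    define M where "M i k = L i k - (if i = i0 then w k / y i0 else 0)" for i k
    have yM: "(\<Sum>i\<in>{..<m}. y i * M i k) = 0" for k
    proof -
      have "(\<Sum>i\<in>{..<m}. y i * M i k) = (\<Sum>i\<in>{..<m}. y i * L i k) - (\<Sum>i\<in>{..<m}. if i = i0 then y i * (w k / y i0) else 0)"
      proof -
        have "y i * M i k = y i * L i k - (if i = i0 then y i * (w k / y i0) else 0)" for i
          unfolding M_def by (simp add: right_diff_distrib)
        then show ?thesis by (simp add: sum_subtractf)
      qed
      also have "\<dots> = 0" using i0 y0 by (simp add: w_def)
      finally show ?thesis .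
    qed
    have "mrank m h M < m"
    proof -
      define SS where "SS = {card S | S. S \<subseteq> {..<h} \<and> lin_indep_cols m M S}"
      have fSS: "finite SS"
      proof -
        have "SS \<subseteq> card ` Pow {..<h}" unfolding SS_def by auto
        then show ?thesis by (rule finite_subset) simp
      qed
      have neSS: "SS \<noteq> {}" unfolding SS_def lin_indep_cols_def by auto
      have "\<forall>x\<in>SS. x < m"
      proof
        fix x assume "x \<in> SS"
        then obtain S where S: "x = card S" "S \<subseteq> {..<h}" "lin_indep_cols m M S" unfolding SS_def by blast
        have fS: "finite S" using S(2) finite_subset by blast
        define J where "J = {..<m} - {i0}"
        have inj: "\<forall>a. (\<forall>j\<in>J. (\<Sum>k\<in>S. M j k * a k) = 0) \<longrightarrow> (\<forall>k\<in>S. a k = 0)"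
        proof (intro allI impI)
          fix a assume hJ: "\<forall>j\<in>J. (\<Sum>k\<in>S. M j k * a k) = 0"
          have "\<forall>i<m. (\<Sum>k\<in>S. a k * M i k) = 0"
          proof (intro allI impI)
            fix i assume im: "i < m"
            show "(\<Sum>k\<in>S. a k * M i k) = 0"
            proof (cases "i = i0")
              case False
              then show ?thesis using hJ im by (simp add: J_def mult.commute)
            next
              case True
              have "y i0 * (\<Sum>k\<in>S. a k * M i0 k) = (\<Sum>k\<in>S. a k * (y i0 * M i0 k))"
                by (simp add: sum_distrib_left algebra_simps)
              also have "\<dots> = (\<Sum>k\<in>S. a k * (- (\<Sum>j\<in>J. y j * M j k)))"
              proof (rule sum.cong[OF refl])
                fix k
                have "(\<Sum>i\<in>{..<m}. y i * M i k) = y i0 * M i0 k + (\<Sum>j\<in>J. y j * M j k)"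
                  unfolding J_def using i0 by (simp add: sum.remove)
                then have "y i0 * M i0 k = - (\<Sum>j\<in>J. y j * M j k)" using yM[of k] by simp
                then show "a k * (y i0 * M i0 k) = a k * (- (\<Sum>j\<in>J. y j * M j k))" by simp
              qed
              also have "\<dots> = - (\<Sum>j\<in>J. y j * (\<Sum>k\<in>S. M j k * a k))"
                by (simp add: sum_distrib_left sum_negf algebra_simps sum.swap[of _ S J])
              also have "\<dots> = 0" using hJ by simp
              finally show ?thesis using True y0 by simp
            qed
          qed
          then show "\<forall>k\<in>S. a k = 0" using S(3) unfolding lin_indep_cols_def by blast
        qed
        have "card S \<le> card J"
          using inj_le[THEN spec[of _ J], THEN spec[of _ S], THEN spec[of _ M], THEN mp, THEN mp, THEN mp, THEN mp]
            inj fS by (simp add: J_def)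
        also have "card J = m - 1" using i0 by (simp add: J_def)
        finally show "x < m" using S(1) i0 by linarith
      qed
      then show ?thesis unfolding mrank_def SS_def[symmetric] using fSS neSS by simp
    qed
    then have "M \<in> Vrank m h" by (simp add: Vrank_def)
    then have cle: "c \<le> mdist m h L M" using Lok by (simp add: L_ok_def)
    have "mdist m h L M \<le> t / s"
      unfolding mdist_def
    proof (rule Max.boundedI)
      show "finite (insert 0 ((\<lambda>(i, k). \<bar>L i k - M i k\<bar>) ` ({..<m} \<times> {..<h})))" by simp
      show "insert 0 ((\<lambda>(i, k). \<bar>L i k - M i k\<bar>) ` ({..<m} \<times> {..<h})) \<noteq> {}" by simp
      fix a assume "a \<in> insert 0 ((\<lambda>(i, k). \<bar>L i k - M i k\<bar>) ` ({..<m} \<times> {..<h}))"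
      then consider "a = 0" | i k where "i < m" "k < h" "a = \<bar>L i k - M i k\<bar>" by auto
      then show "a \<le> t / s"
      proof cases
        case 1 then show ?thesis using t0 spos by simp
      next
        case 2
        show ?thesis
        proof (cases "i = i0")
          case False then show ?thesis using 2 t0 spos by (simp add: M_def)
        next
          case True
          have "a = \<bar>w k\<bar> / s" using 2 True i0 by (simp add: M_def abs_divide)
          also have "\<dots> \<le> t / s" using h 2 spos by (intro divide_right_mono) (auto simp: w_def)
          finally show ?thesis .
        qed
      qed
    qed
    then have "c \<le> t / s" using cle by linarith
    then have "c * s \<le> t" using spos by (simp add: field_simps)
    then show ?thesis using yi c0 by (meson mult_left_mono order_trans less_imp_le)
  qed
qed


lemma psf: "product_sigma_finite (\<lambda>_::nat. lborel :: real measure)"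
  unfolding product_sigma_finite_def using sigma_finite_lborel by simp

lemma translate_PiM:
  fixes a :: "nat \<Rightarrow> real" and I :: "nat set"
  assumes fI: "finite I"
  shows "distr (PiM I (\<lambda>_. lborel)) (PiM I (\<lambda>_. lborel)) (\<lambda>x. \<lambda>k\<in>I. x k + a k) = PiM I (\<lambda>_. lborel)"
proof (rule product_sigma_finite.PiM_eqI[OF psf fI])
  show "sets (distr (PiM I (\<lambda>_. lborel)) (PiM I (\<lambda>_. lborel)) (\<lambda>x. \<lambda>k\<in>I. x k + a k)) = sets (PiM I (\<lambda>_. lborel))"
    by simp
  have meas: "(\<lambda>x. \<lambda>k\<in>I. x k + a k) \<in> measurable (PiM I (\<lambda>_. lborel)) (PiM I (\<lambda>_. lborel))"
    by (intro measurable_restrict) (auto intro!: measurable_component_singleton simp: measurable_cong_sets[OF refl sets_lborel])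
  fix A :: "nat \<Rightarrow> real set" assume A: "\<And>i. i \<in> I \<Longrightarrow> A i \<in> sets lborel"
  have PA: "Pi\<^sub>E I A \<in> sets (PiM I (\<lambda>_. lborel))" using A fI by (intro sets_PiM_I_finite) auto
  have pre: "(\<lambda>x. \<lambda>k\<in>I. x k + a k) -` Pi\<^sub>E I A \<inter> space (PiM I (\<lambda>_. lborel)) = Pi\<^sub>E I (\<lambda>i. (\<lambda>t. t + a i) -` A i)"
    by (auto simp: space_PiM PiE_iff)
  have sA: "(\<lambda>t. t + a i) -` A i \<in> sets lborel" if "i \<in> I" for i
  proof -
    have "(\<lambda>t. t + a i) -` A i \<inter> space lborel \<in> sets lborel"
      by (rule measurable_sets[OF _ A[OF that]]) simp
    then show ?thesis by simp
  qed
  have tr: "emeasure lborel ((\<lambda>t. t + a i) -` A i) = emeasure lborel (A i)" if "i \<in> I" for i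
  proof -
    have "emeasure lborel (A i) = emeasure (distr lborel borel ((+) (a i))) (A i)"
      by (simp add: lborel_distr_plus)
    also have "\<dots> = emeasure lborel ((+) (a i) -` A i \<inter> space lborel)"
      using A[OF that] by (intro emeasure_distr) auto
    also have "(+) (a i) -` A i \<inter> space lborel = (\<lambda>t. t + a i) -` A i" by (auto simp: add.commute)
    finally show ?thesis by simp
  qed
  have "emeasure (distr (PiM I (\<lambda>_. lborel)) (PiM I (\<lambda>_. lborel)) (\<lambda>x. \<lambda>k\<in>I. x k + a k)) (Pi\<^sub>E I A)
      = emeasure (PiM I (\<lambda>_. lborel)) ((\<lambda>x. \<lambda>k\<in>I. x k + a k) -` Pi\<^sub>E I A \<inter> space (PiM I (\<lambda>_. lborel)))"
    by (rule emeasure_distr[OF meas PA])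
  also have "\<dots> = (\<Prod>i\<in>I. emeasure lborel ((\<lambda>t. t + a i) -` A i))"
    unfolding pre by (rule product_sigma_finite.emeasure_PiM[OF psf fI sA])
  also have "\<dots> = (\<Prod>i\<in>I. emeasure lborel (A i))" using tr by simp
  finally show "emeasure (distr (PiM I (\<lambda>_. lborel)) (PiM I (\<lambda>_. lborel)) (\<lambda>x. \<lambda>k\<in>I. x k + a k)) (Pi\<^sub>E I A) = (\<Prod>i\<in>I. emeasure lborel (A i))" .
qed

lemma integral_translate:
  fixes a :: "nat \<Rightarrow> real" and I :: "nat set" and f :: "(nat \<Rightarrow> real) \<Rightarrow> real"
  assumes fI: "finite I" and f: "f \<in> borel_measurable (PiM I (\<lambda>_. lborel))"
  shows "(\<integral>x. f (\<lambda>k\<in>I. x k + a k) \<partial>PiM I (\<lambda>_. lborel)) = (\<integral>x. f x \<partial>PiM I (\<lambda>_. lborel))"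
proof -
  have meas: "(\<lambda>x. \<lambda>k\<in>I. x k + a k) \<in> measurable (PiM I (\<lambda>_. lborel)) (PiM I (\<lambda>_. lborel))"
    by (intro measurable_restrict) (auto intro!: measurable_component_singleton simp: measurable_cong_sets[OF refl sets_lborel])
  have "(\<integral>x. f x \<partial>PiM I (\<lambda>_. lborel)) = (\<integral>x. f x \<partial>distr (PiM I (\<lambda>_. lborel)) (PiM I (\<lambda>_. lborel)) (\<lambda>x. \<lambda>k\<in>I. x k + a k))"
    by (simp add: translate_PiM[OF fI])
  also have "\<dots> = (\<integral>x. f (\<lambda>k\<in>I. x k + a k) \<partial>PiM I (\<lambda>_. lborel))"
    by (rule integral_distr[OF meas f])
  finally show ?thesis by simp
qed

lemma box_emeasure:
  fixes v :: "nat \<Rightarrow> real"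
  assumes "0 \<le> a"
  shows "emeasure (PiM {..<h} (\<lambda>_. lborel)) (Pi\<^sub>E {..<h} (\<lambda>k. {v k - a..v k + a})) = ennreal ((2*a)^h)"
    and "measure (PiM {..<h} (\<lambda>_. lborel)) (Pi\<^sub>E {..<h} (\<lambda>k. {v k - a..v k + a})) = (2*a)^h"
    and "Pi\<^sub>E {..<h} (\<lambda>k. {v k - a..v k + a}) \<in> sets (PiM {..<h} (\<lambda>_. lborel))"
proof -
  have "emeasure (PiM {..<h} (\<lambda>_. lborel)) (Pi\<^sub>E {..<h} (\<lambda>k. {v k - a..v k + a})) = (\<Prod>i\<in>{..<h}. emeasure lborel {v i - a..v i + a})"
    by (rule product_sigma_finite.emeasure_PiM[OF psf]) auto
  also have "\<dots> = (\<Prod>i\<in>{..<h}. ennreal (2*a))" using assms by (intro prod.cong) auto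
  also have "\<dots> = ennreal (2*a) ^ h" by simp
  also have "\<dots> = ennreal ((2*a)^h)" using assms by (intro ennreal_power) simp
  finally show e: "emeasure (PiM {..<h} (\<lambda>_. lborel)) (Pi\<^sub>E {..<h} (\<lambda>k. {v k - a..v k + a})) = ennreal ((2*a)^h)" .
  then show "measure (PiM {..<h} (\<lambda>_. lborel)) (Pi\<^sub>E {..<h} (\<lambda>k. {v k - a..v k + a})) = (2*a)^h"
    using assms by (simp add: measure_def)
  show "Pi\<^sub>E {..<h} (\<lambda>k. {v k - a..v k + a}) \<in> sets (PiM {..<h} (\<lambda>_. lborel))"
    by (intro sets_PiM_I_finite) auto
qed

lemma integrable_boxbound:
  fixes g :: "(nat \<Rightarrow> real) \<Rightarrow> real" and v :: "nat \<Rightarrow> real"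
  assumes g: "g \<in> borel_measurable (PiM {..<h} (\<lambda>_. lborel))" and a: "0 \<le> a"
    and bd: "\<And>x. x \<in> space (PiM {..<h} (\<lambda>_. lborel)) \<Longrightarrow> \<bar>g x\<bar> \<le> M * indicator (Pi\<^sub>E {..<h} (\<lambda>k. {v k - a..v k + a})) x"
  shows "integrable (PiM {..<h} (\<lambda>_. lborel)) g"
proof (rule Bochner_Integration.integrable_bound[OF _ g])
  show "integrable (PiM {..<h} (\<lambda>_. lborel)) (\<lambda>x. M * indicator (Pi\<^sub>E {..<h} (\<lambda>k. {v k - a..v k + a})) x)"
    using box_emeasure[OF a, of h v] by (intro integrable_mult_right integrable_real_indicator) auto
  show "AE x in PiM {..<h} (\<lambda>_. lborel). norm (g x) \<le> norm (M * indicator (Pi\<^sub>E {..<h} (\<lambda>k. {v k - a..v k + a})) x)"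
  proof (rule AE_I2)
    fix x assume x: "x \<in> space (PiM {..<h} (\<lambda>_. lborel :: real measure))"
    have "\<bar>g x\<bar> \<le> M * indicator (Pi\<^sub>E {..<h} (\<lambda>k. {v k - a..v k + a})) x" by (rule bd[OF x])
    also have "\<dots> \<le> \<bar>M * indicator (Pi\<^sub>E {..<h} (\<lambda>k. {v k - a..v k + a})) x\<bar>" by (rule abs_ge_self)
    finally show "norm (g x) \<le> norm (M * indicator (Pi\<^sub>E {..<h} (\<lambda>k. {v k - a..v k + a})) x :: real)" by simp
  qed
qed


lemma conv_single:
  assumes "\<And>a'. a' \<noteq> a \<Longrightarrow> chi (t - of_int a') = 0"
  shows "conv N f chi t = zext N f a * chi (t - of_int a)"
proof -
  have "conv N f chi t = infsum (\<lambda>n::int. zext N f n * chi (t - of_int n)) {a}"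
    unfolding conv_def by (rule infsum_cong_neutral) (use assms in auto)
  then show ?thesis by simp
qed

lemma conv_nonzero:
  assumes "conv N f chi t \<noteq> 0"
  shows "\<exists>a::int. chi (t - of_int a) \<noteq> 0"
proof (rule ccontr)
  assume "\<not> ?thesis"
  then have "conv N f chi t = 0" unfolding conv_def by (intro infsum_0) auto
  then show False using assms by simp
qed

definition xi :: "nat \<Rightarrow> (nat \<Rightarrow> nat \<Rightarrow> int) \<Rightarrow> nat \<Rightarrow> (nat \<Rightarrow> real) \<Rightarrow> real" where
  "xi h \<Xi> j y = (\<Sum>k<h. real_of_int (\<Xi> j k) * y k)"

lemma xi_diff: "xi h \<Xi> j (\<lambda>k. x k - y k) = xi h \<Xi> j x - xi h \<Xi> j y"
  unfolding xi_def by (simp add: right_diff_distrib sum_subtractf)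

lemma xi_int: "xi h \<Xi> j (\<lambda>k. real_of_int (n k)) = real_of_int (\<Sum>k<h. \<Xi> j k * n k)"
  unfolding xi_def by simp

locale core =
  fixes d h :: nat and \<Xi> :: "nat \<Rightarrow> nat \<Rightarrow> int" and chi :: "real \<Rightarrow> real" and \<eta> K1 \<delta> C :: real
  assumes P1: "\<forall>y t. (\<forall>j<d. \<bar>xi h \<Xi> j y\<bar> \<le> t) \<longrightarrow> (\<forall>k<h. \<bar>y k\<bar> \<le> K1 * t)"
    and P2: "\<forall>y b. (\<forall>j<d. b j \<in> \<int> \<and> \<bar>xi h \<Xi> j y - b j\<bar> \<le> \<delta>) \<longrightarrow> (\<exists>z. \<forall>j<d. xi h \<Xi> j z = b j)"
    and Xi: "Xi_ok d h C \<Xi>"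
    and eta: "0 < \<eta>" "\<eta> \<le> 1/4" "\<eta> \<le> \<delta>" "K1 * \<eta> \<le> 1"
    and chi_meas: "chi \<in> borel_measurable borel" and chi01: "\<forall>x. 0 \<le> chi x \<and> chi x \<le> 1"
    and chisupp: "eta_supported \<eta> chi"
    and K1pos: "K1 > 0" and Cpos: "C > 0" and h1: "h \<ge> 1"
begin

definition psi :: "(nat \<Rightarrow> real) \<Rightarrow> real" where
  "psi y = (\<Prod>j<d. chi (xi h \<Xi> j y))"

abbreviation MH :: "(nat \<Rightarrow> real) measure" where
  "MH \<equiv> PiM {..<h} (\<lambda>_. lborel)"

lemma chi_supp: "chi x \<noteq> 0 \<Longrightarrow> \<bar>x\<bar> \<le> \<eta>"
  using chisupp unfolding eta_supported_def by blast

lemma chi_one: "\<bar>x\<bar> \<le> \<eta>/2 \<Longrightarrow> chi x = 1"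
  using chisupp unfolding eta_supported_def by blast

lemma psi01: "0 \<le> psi y" "psi y \<le> 1"
  unfolding psi_def using chi01 by (auto intro: prod_nonneg prod_le_1)

lemma psi_nz: assumes "psi y \<noteq> 0" shows "\<forall>j<d. \<bar>xi h \<Xi> j y\<bar> \<le> \<eta>" and "\<forall>k<h. \<bar>y k\<bar> \<le> K1 * \<eta>"
proof -
  show a: "\<forall>j<d. \<bar>xi h \<Xi> j y\<bar> \<le> \<eta>"
    using assms unfolding psi_def by (auto intro: chi_supp)
  show "\<forall>k<h. \<bar>y k\<bar> \<le> K1 * \<eta>" using P1 a by blast
qed

lemma xi_meas: "(\<lambda>x. xi h \<Xi> j x) \<in> borel_measurable MH"
  unfolding xi_def
  by (intro borel_measurable_sum borel_measurable_times borel_measurable_const)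
     (auto intro!: measurable_component_singleton simp: measurable_cong_sets[OF refl sets_lborel])

lemma psi_meas: "psi \<in> borel_measurable MH"
  unfolding psi_def
  by (intro borel_measurable_prod measurable_compose[OF xi_meas chi_meas])

lemma psi_shift_meas: "(\<lambda>x. psi (\<lambda>k. x k - v k)) \<in> borel_measurable MH"
proof -
  have "(\<lambda>x. psi (\<lambda>k. x k - v k)) = (\<lambda>x. \<Prod>j<d. chi (xi h \<Xi> j x - xi h \<Xi> j v))"
    unfolding psi_def by (simp add: xi_diff)
  also have "\<dots> \<in> borel_measurable MH"
    by (intro borel_measurable_prod measurable_compose[OF _ chi_meas] borel_measurable_diff xi_meas) simp
  finally show ?thesis .
qed

lemma psi_shift_box: "\<bar>psi (\<lambda>k. x k - v k)\<bar> \<le> 1 * indicator (Pi\<^sub>E {..<h} (\<lambda>k. {v k - K1*\<eta>..v k + K1*\<eta>})) x"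
  if "x \<in> space MH" for x
proof (cases "psi (\<lambda>k. x k - v k) = 0")
  case False
  have "\<forall>k<h. \<bar>x k - v k\<bar> \<le> K1 * \<eta>" using psi_nz(2)[OF False] by simp
  then have "x \<in> Pi\<^sub>E {..<h} (\<lambda>k. {v k - K1*\<eta>..v k + K1*\<eta>})"
    using that by (auto simp: space_PiM PiE_iff abs_le_iff)
  then show ?thesis using psi01[of "\<lambda>k. x k - v k"] by simp
qed simp

definition W where "W = (\<integral>x. psi x \<partial>MH)"

lemma W_shift: "(\<integral>x. psi (\<lambda>k. x k - v k) \<partial>MH) = W"
proof -
  have "(\<integral>x. psi (\<lambda>k\<in>{..<h}. x k + (- v k)) \<partial>MH) = (\<integral>x. psi x \<partial>MH)"
    by (rule integral_translate[OF _ psi_meas]) simp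
  moreover have "psi (\<lambda>k\<in>{..<h}. x k + (- v k)) = psi (\<lambda>k. x k - v k)" for x
    unfolding psi_def xi_def by simp
  ultimately show ?thesis unfolding W_def by simp
qed

lemma W_upper: "W \<le> (2 * K1 * \<eta>)^h"
proof -
  have K0: "0 \<le> K1 * \<eta>" using K1pos eta by simp
  have int: "integrable MH (\<lambda>x. psi (\<lambda>k. x k - 0))"
    by (rule integrable_boxbound[OF psi_shift_meas K0 psi_shift_box])
  have "W \<le> (\<integral>x. 1 * indicator (Pi\<^sub>E {..<h} (\<lambda>k. {0 - K1*\<eta>..0 + K1*\<eta>})) x \<partial>MH)"
    unfolding W_def
  proof (rule integral_mono)
    show "integrable MH psi" using int by simp
    show "integrable MH (\<lambda>x. 1 * indicator (Pi\<^sub>E {..<h} (\<lambda>k. {0 - K1*\<eta>..0 + K1*\<eta>})) x :: real)"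
      using box_emeasure[OF K0, of h "\<lambda>_. 0"] by (intro integrable_mult_right integrable_real_indicator) auto
    fix x assume "x \<in> space MH"
    then show "psi x \<le> 1 * indicator (Pi\<^sub>E {..<h} (\<lambda>k. {0 - K1*\<eta>..0 + K1*\<eta>})) x"
      using psi_shift_box[of x "\<lambda>_. 0"] by simp
  qed
  also have "\<dots> = (2 * (K1 * \<eta>))^h"
    using box_emeasure(2)[OF K0, of h "\<lambda>_. 0"] box_emeasure(3)[OF K0, of h "\<lambda>_. 0"]
    by (simp add: Int_absorb2 sets.sets_into_space)
  finally show ?thesis by (simp add: mult.assoc)
qed

lemma C_bound: "j < d \<Longrightarrow> k < h \<Longrightarrow> \<bar>real_of_int (\<Xi> j k)\<bar> \<le> C"
  using Xi unfolding Xi_ok_def by blast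

lemma W_lower: "(\<eta> / (real h * C))^h \<le> W"
proof -
  define a where "a = \<eta> / (2 * real h * C)"
  have a0: "0 \<le> a" using eta Cpos by (simp add: a_def)
  have one: "psi x = 1" if x: "\<forall>k<h. \<bar>x k\<bar> \<le> a" for x
  proof -
    have "chi (xi h \<Xi> j x) = 1" if j: "j < d" for j
    proof (rule chi_one)
      have "\<bar>xi h \<Xi> j x\<bar> \<le> (\<Sum>k<h. \<bar>real_of_int (\<Xi> j k) * x k\<bar>)" unfolding xi_def by (rule sum_abs)
      also have "\<dots> \<le> (\<Sum>k<h. C * a)"
        using C_bound[OF j] x Cpos unfolding abs_mult by (intro sum_mono mult_mono) auto
      also have "\<dots> = \<eta>/2" using h1 Cpos by (simp add: a_def field_simps)
      finally show "\<bar>xi h \<Xi> j x\<bar> \<le> \<eta>/2" .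
    qed
    then show ?thesis unfolding psi_def by simp
  qed
  have int: "integrable MH (\<lambda>x. psi (\<lambda>k. x k - 0))"
    using K1pos eta by (intro integrable_boxbound[OF psi_shift_meas _ psi_shift_box]) auto
  have "(\<integral>x. indicator (Pi\<^sub>E {..<h} (\<lambda>k. {0 - a..0 + a})) x \<partial>MH) \<le> W"
    unfolding W_def
  proof (rule integral_mono)
    show "integrable MH psi" using int by simp
    show "integrable MH (\<lambda>x. indicator (Pi\<^sub>E {..<h} (\<lambda>k. {0 - a..0 + a})) x :: real)"
      using box_emeasure[OF a0, of h "\<lambda>_. 0"] by (intro integrable_real_indicator) auto
    fix x assume "x \<in> space MH"
    show "indicator (Pi\<^sub>E {..<h} (\<lambda>k. {0 - a..0 + a})) x \<le> psi x"
    proof (cases "x \<in> Pi\<^sub>E {..<h} (\<lambda>k. {0 - a..0 + a})")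
      case True
      then have "\<forall>k<h. \<bar>x k\<bar> \<le> a" by (force simp: PiE_iff abs_le_iff)
      then show ?thesis using one True by simp
    qed (simp add: psi01)
  qed
  moreover have "(\<integral>x. indicator (Pi\<^sub>E {..<h} (\<lambda>k. {0 - a..0 + a})) x \<partial>MH) = (2 * a)^h"
    using box_emeasure(2)[OF a0, of h "\<lambda>_. 0"] box_emeasure(3)[OF a0, of h "\<lambda>_. 0"]
    by (simp add: Int_absorb2 sets.sets_into_space)
  moreover have "2 * a = \<eta> / (real h * C)" using h1 Cpos by (simp add: a_def field_simps)
  ultimately show ?thesis by simp
qed

end


context core begin

definition an :: "nat \<Rightarrow> (nat \<Rightarrow> int \<Rightarrow> real) \<Rightarrow> (nat \<Rightarrow> int) \<Rightarrow> (nat \<Rightarrow> int) \<Rightarrow> real" where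
  "an N f r n = (\<Prod>j<d. zext N (f j) ((\<Sum>k<h. \<Xi> j k * n k) + r j))"

definition Lam :: "(nat \<Rightarrow> int) set" where "Lam = {n. \<forall>k\<ge>h. n k = 0}"

lemma tri2: "\<bar>(X::real) - p\<bar> \<le> e \<Longrightarrow> \<bar>X - q\<bar> \<le> e \<Longrightarrow> \<bar>p - q\<bar> \<le> 2 * e"
  unfolding abs_le_iff by linarith

lemma int_small: "\<bar>real_of_int z\<bar> < 1 \<Longrightarrow> z = 0"
  by linarith

lemma uniq:
  assumes n: "n \<in> Lam" and n': "n' \<in> Lam"
    and p: "psi (\<lambda>k. x k - real_of_int (n k)) \<noteq> 0" and p': "psi (\<lambda>k. x k - real_of_int (n' k)) \<noteq> 0"
  shows "n = n'"
proof -
  have a: "\<forall>j<d. \<bar>xi h \<Xi> j x - xi h \<Xi> j (\<lambda>k. real_of_int (n k))\<bar> \<le> \<eta>"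
    using psi_nz(1)[OF p] by (simp add: xi_diff)
  have b: "\<forall>j<d. \<bar>xi h \<Xi> j x - xi h \<Xi> j (\<lambda>k. real_of_int (n' k))\<bar> \<le> \<eta>"
    using psi_nz(1)[OF p'] by (simp add: xi_diff)
  have "\<forall>j<d. \<bar>xi h \<Xi> j (\<lambda>k. real_of_int (n k) - real_of_int (n' k))\<bar> \<le> 0"
  proof (intro allI impI)
    fix j assume j: "j < d"
    have "\<bar>xi h \<Xi> j x - xi h \<Xi> j (\<lambda>k. real_of_int (n k))\<bar> \<le> \<eta>"
      "\<bar>xi h \<Xi> j x - xi h \<Xi> j (\<lambda>k. real_of_int (n' k))\<bar> \<le> \<eta>" using a b j by auto
    then have "\<bar>xi h \<Xi> j (\<lambda>k. real_of_int (n k)) - xi h \<Xi> j (\<lambda>k. real_of_int (n' k))\<bar> \<le> 2 * \<eta>"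
      by (rule tri2)
    then have "\<bar>xi h \<Xi> j (\<lambda>k. real_of_int (n k)) - xi h \<Xi> j (\<lambda>k. real_of_int (n' k))\<bar> < 1"
      using eta by linarith
    then have "\<bar>real_of_int ((\<Sum>k<h. \<Xi> j k * n k) - (\<Sum>k<h. \<Xi> j k * n' k))\<bar> < 1"
      unfolding xi_int by simp
    then have "(\<Sum>k<h. \<Xi> j k * n k) - (\<Sum>k<h. \<Xi> j k * n' k) = 0" by (rule int_small)
    then show "\<bar>xi h \<Xi> j (\<lambda>k. real_of_int (n k) - real_of_int (n' k))\<bar> \<le> 0"
      unfolding xi_diff xi_int by simp
  qed
  then have "\<forall>k<h. \<bar>real_of_int (n k) - real_of_int (n' k)\<bar> \<le> K1 * 0" using P1 by blast
  then have "\<forall>k<h. n k = n' k" by simp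
  moreover have "\<forall>k\<ge>h. n k = n' k" using n n' by (simp add: Lam_def)
  ultimately show ?thesis by (metis not_le ext)
qed

lemma pointwise:
  assumes fA: "finite A" and AL: "A \<subseteq> Lam" and Acov: "\<forall>n\<in>Lam. an N f r n \<noteq> 0 \<longrightarrow> n \<in> A"
  shows "(\<Prod>j<d. conv N (f j) chi (xi h \<Xi> j x + real_of_int (r j)))
         = (\<Sum>n\<in>A. an N f r n * psi (\<lambda>k. x k - real_of_int (n k)))"
proof (cases "\<exists>n\<in>Lam. psi (\<lambda>k. x k - real_of_int (n k)) \<noteq> 0")
  case True
  then obtain n where n: "n \<in> Lam" and pn: "psi (\<lambda>k. x k - real_of_int (n k)) \<noteq> 0" by blast
  have cl: "\<forall>j<d. \<bar>xi h \<Xi> j x - xi h \<Xi> j (\<lambda>k. real_of_int (n k))\<bar> \<le> \<eta>"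
    using psi_nz(1)[OF pn] by (simp add: xi_diff)
  have cj: "conv N (f j) chi (xi h \<Xi> j x + real_of_int (r j)) =
       zext N (f j) ((\<Sum>k<h. \<Xi> j k * n k) + r j) * chi (xi h \<Xi> j (\<lambda>k. x k - real_of_int (n k)))"
    if j: "j < d" for j
  proof -
    define aj where "aj = (\<Sum>k<h. \<Xi> j k * n k) + r j"
    have e: "xi h \<Xi> j x + real_of_int (r j) - real_of_int aj = xi h \<Xi> j (\<lambda>k. x k - real_of_int (n k))"
      unfolding aj_def xi_diff xi_int by simp
    have "conv N (f j) chi (xi h \<Xi> j x + real_of_int (r j)) = zext N (f j) aj * chi (xi h \<Xi> j x + real_of_int (r j) - real_of_int aj)"
    proof (rule conv_single)
      fix a' assume a': "a' \<noteq> aj"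
      then have "\<bar>real_of_int a' - real_of_int aj\<bar> \<ge> 1" by linarith
      moreover have "\<bar>xi h \<Xi> j x + real_of_int (r j) - real_of_int aj\<bar> \<le> \<eta>"
      proof -
        have E2: "xi h \<Xi> j x + real_of_int (r j) - real_of_int aj = xi h \<Xi> j x - xi h \<Xi> j (\<lambda>k. real_of_int (n k))"
          using e xi_diff[of h \<Xi> j x "\<lambda>k. real_of_int (n k)"] by linarith
        have "\<bar>xi h \<Xi> j x + real_of_int (r j) - real_of_int aj\<bar> = \<bar>xi h \<Xi> j x - xi h \<Xi> j (\<lambda>k. real_of_int (n k))\<bar>"
          by (simp only: E2)
        then show ?thesis using cl j by simp
      qed
      ultimately have "\<bar>xi h \<Xi> j x + real_of_int (r j) - real_of_int a'\<bar> > \<eta>" using eta by linarith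
      then show "chi (xi h \<Xi> j x + real_of_int (r j) - real_of_int a') = 0" using chi_supp by force
    qed
    then show ?thesis using e by (simp add: aj_def)
  qed
  have lhs: "(\<Prod>j<d. conv N (f j) chi (xi h \<Xi> j x + real_of_int (r j))) = an N f r n * psi (\<lambda>k. x k - real_of_int (n k))"
    unfolding an_def psi_def by (simp add: cj prod.distrib)
  have "(\<Sum>n'\<in>A. an N f r n' * psi (\<lambda>k. x k - real_of_int (n' k))) = (\<Sum>n'\<in>A. if n' = n then an N f r n * psi (\<lambda>k. x k - real_of_int (n k)) else 0)"
  proof (rule sum.cong[OF refl])
    fix n' assume n': "n' \<in> A"
    show "an N f r n' * psi (\<lambda>k. x k - real_of_int (n' k)) = (if n' = n then an N f r n * psi (\<lambda>k. x k - real_of_int (n k)) else 0)"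
    proof (cases "n' = n")
      case False
      then have "psi (\<lambda>k. x k - real_of_int (n' k)) = 0" using uniq[OF n _ pn] n' AL by blast
      then show ?thesis using False by simp
    qed simp
  qed
  also have "\<dots> = an N f r n * psi (\<lambda>k. x k - real_of_int (n k))"
    using fA Acov n by (auto simp: sum.delta)
  finally show ?thesis using lhs by simp
next
  case False
  have "(\<Prod>j<d. conv N (f j) chi (xi h \<Xi> j x + real_of_int (r j))) = 0"
  proof (rule ccontr)
    assume nz: "(\<Prod>j<d. conv N (f j) chi (xi h \<Xi> j x + real_of_int (r j))) \<noteq> 0"
    have "\<forall>j<d. \<exists>b::int. chi (xi h \<Xi> j x + real_of_int (r j) - of_int b) \<noteq> 0"
      using nz by (auto intro!: conv_nonzero)
    then obtain bb where bb: "\<forall>j<d. chi (xi h \<Xi> j x + real_of_int (r j) - of_int (bb j)) \<noteq> 0"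
      by metis
    define B where "B j = real_of_int (bb j - r j)" for j
    have "\<forall>j<d. B j \<in> \<int> \<and> \<bar>xi h \<Xi> j x - B j\<bar> \<le> \<delta>"
    proof (intro allI impI conjI)
      fix j assume j: "j < d"
      show "B j \<in> \<int>" by (simp add: B_def)
      have "\<bar>xi h \<Xi> j x + real_of_int (r j) - of_int (bb j)\<bar> \<le> \<eta>" using bb j chi_supp by blast
      then show "\<bar>xi h \<Xi> j x - B j\<bar> \<le> \<delta>" using eta by (simp add: B_def algebra_simps)
    qed
    then obtain z where z: "\<forall>j<d. xi h \<Xi> j z = B j" using P2 by blast
    define z' where "z' k = (if k < h then z k else 0)" for k
    have z'v: "z' \<in> vecs h" by (simp add: vecs_def z'_def)
    have mvz: "mv d h (realmat \<Xi>) z' = (\<lambda>i. if i < d then B i else 0)"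
    proof
      fix i
      have "(\<Sum>k<h. realmat \<Xi> i k * z' k) = xi h \<Xi> i z" unfolding xi_def realmat_def z'_def by simp
      then show "mv d h (realmat \<Xi>) z' i = (if i < d then B i else 0)"
        unfolding mv_def using z by simp
    qed
    have "mv d h (realmat \<Xi>) z' \<in> ivecs d \<inter> mv d h (realmat \<Xi>) ` vecs h"
    proof
      show "mv d h (realmat \<Xi>) z' \<in> mv d h (realmat \<Xi>) ` vecs h" using z'v by blast
      show "mv d h (realmat \<Xi>) z' \<in> ivecs d" unfolding mvz by (auto simp: ivecs_def vecs_def B_def)
    qed
    moreover have E: "mv d h (realmat \<Xi>) ` ivecs h = ivecs d \<inter> mv d h (realmat \<Xi>) ` vecs h"
      using Xi unfolding Xi_ok_def by (elim conjE)
    ultimately have "mv d h (realmat \<Xi>) z' \<in> mv d h (realmat \<Xi>) ` ivecs h" by (simp only: E)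
    then obtain w where w: "w \<in> ivecs h" "mv d h (realmat \<Xi>) w = mv d h (realmat \<Xi>) z'"
    proof (rule imageE)
      fix w assume a: "mv d h (realmat \<Xi>) z' = mv d h (realmat \<Xi>) w" "w \<in> ivecs h"
      assume t: "\<And>w. w \<in> ivecs h \<Longrightarrow> mv d h (realmat \<Xi>) w = mv d h (realmat \<Xi>) z' \<Longrightarrow> thesis"
      show thesis by (rule t[OF a(2) a(1)[symmetric]])
    qed
    define n where "n k = \<lfloor>w k\<rfloor>" for k
    have wn: "real_of_int (n k) = w k" for k
    proof (cases "k < h")
      case True then have "w k \<in> \<int>" using w(1) by (simp add: ivecs_def)
      then obtain zz where "w k = of_int zz" by (elim Ints_cases)
      then show ?thesis by (simp add: n_def)
    next
      case False then have "w k = 0" using w(1) by (simp add: ivecs_def vecs_def)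
      then show ?thesis by (simp add: n_def)
    qed
    have nL: "n \<in> Lam" unfolding Lam_def n_def using w(1) by (simp add: ivecs_def vecs_def)
    have xn: "xi h \<Xi> j (\<lambda>k. real_of_int (n k)) = B j" if j: "j < d" for j
    proof -
      have "xi h \<Xi> j (\<lambda>k. real_of_int (n k)) = mv d h (realmat \<Xi>) w j"
        unfolding xi_def mv_def realmat_def wn using j by simp
      also have "\<dots> = B j" using w(2) mvz j by simp
      finally show ?thesis .
    qed
    have nzj: "\<forall>j\<in>{..<d}. chi (xi h \<Xi> j x - xi h \<Xi> j (\<lambda>k. real_of_int (n k))) \<noteq> 0"
    proof
      fix j assume "j \<in> {..<d}"
      then have j: "j < d" by simp
      have "xi h \<Xi> j x - xi h \<Xi> j (\<lambda>k. real_of_int (n k)) = xi h \<Xi> j x + real_of_int (r j) - of_int (bb j)"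
        using xn[OF j] by (simp add: B_def)
      moreover have "chi (xi h \<Xi> j x + real_of_int (r j) - of_int (bb j)) \<noteq> 0" using bb j by blast
      ultimately show "chi (xi h \<Xi> j x - xi h \<Xi> j (\<lambda>k. real_of_int (n k))) \<noteq> 0" by (simp only:) simp
    qed
    have "psi (\<lambda>k. x k - real_of_int (n k)) \<noteq> 0"
      unfolding psi_def xi_diff using prod_zero_iff[of "{..<d}"] nzj by simp
    then show False using False nL by blast
  qed
  moreover have "(\<Sum>n\<in>A. an N f r n * psi (\<lambda>k. x k - real_of_int (n k))) = 0"
    using False AL by (intro sum.neutral) auto
  ultimately show ?thesis by simp
qed

end


lemma abs_int_bound:
  fixes f g :: "'a \<Rightarrow> real"
  assumes "integrable M f" "integrable M g" "\<And>x. x \<in> space M \<Longrightarrow> \<bar>f x\<bar> \<le> g x"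
  shows "\<bar>\<integral>x. f x \<partial>M\<bar> \<le> (\<integral>x. g x \<partial>M)"
proof -
  have "\<bar>\<integral>x. f x \<partial>M\<bar> = norm (\<integral>x. f x \<partial>M)" by simp
  also have "\<dots> \<le> (\<integral>x. norm (f x) \<partial>M)" by (rule integral_norm_bound)
  also have "\<dots> \<le> (\<integral>x. g x \<partial>M)" using assms by (intro integral_mono) auto
  finally show ?thesis .
qed

lemma abs_scale_le: "0 < (a::real) \<Longrightarrow> \<bar>s\<bar> \<le> t \<Longrightarrow> \<bar>a * s\<bar> \<le> a * t"
  by (simp add: abs_mult mult_left_mono)

lemma mv_lip:
  assumes LC: "\<forall>i<m. \<forall>k<h. \<bar>L i k\<bar> \<le> C" and C0: "C \<ge> 0"
  shows "vnorm m (\<lambda>i. mv m h L a i - mv m h L b i) \<le> real h * C * vnorm h (\<lambda>k. a k - b k)"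
proof (rule vnorm_le)
  show "0 \<le> real h * C * vnorm h (\<lambda>k. a k - b k)" using C0 vnorm_nonneg by simp
  fix i assume i: "i < m"
  have "mv m h L a i - mv m h L b i = (\<Sum>k<h. L i k * (a k - b k))"
    using i by (simp add: mv_def right_diff_distrib sum_subtractf)
  then have "\<bar>mv m h L a i - mv m h L b i\<bar> \<le> (\<Sum>k<h. \<bar>L i k * (a k - b k)\<bar>)" by (simp add: sum_abs)
  also have "\<dots> \<le> (\<Sum>k<h. C * vnorm h (\<lambda>k. a k - b k))"
    using LC i C0 unfolding abs_mult by (intro sum_mono mult_mono vnorm_ge) (auto simp: vnorm_nonneg)
  finally show "\<bar>mv m h L a i - mv m h L b i\<bar> \<le> real h * C * vnorm h (\<lambda>k. a k - b k)" by simp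
qed

lemma int_range_real: "1 \<le> (a::int) + b \<Longrightarrow> a + b \<le> int N \<Longrightarrow> \<bar>real_of_int a\<bar> \<le> real N + \<bar>real_of_int b\<bar>"
proof -
  assume "1 \<le> (a::int) + b" "a + b \<le> int N"
  then have "\<bar>a\<bar> \<le> int N + \<bar>b\<bar>" by linarith
  then have "real_of_int \<bar>a\<bar> \<le> real_of_int (int N + \<bar>b\<bar>)" by (simp only: of_int_le_iff)
  then show ?thesis by simp
qed

context core begin

lemma an_bound:
  assumes fb: "\<forall>j<d. \<forall>n. 1 \<le> n \<and> n \<le> int N \<longrightarrow> \<bar>f j n\<bar> \<le> 1"
  shows "\<bar>an N f r n\<bar> \<le> 1"
proof -
  have "\<bar>an N f r n\<bar> = (\<Prod>j<d. \<bar>zext N (f j) ((\<Sum>k<h. \<Xi> j k * n k) + r j)\<bar>)"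
    unfolding an_def by (simp add: abs_prod)
  also have "\<dots> \<le> 1" using fb by (intro prod_le_1) (auto simp: zext_def)
  finally show ?thesis .
qed

lemma estimate:
  fixes N :: nat and \<sigma>F \<sigma>G KF KG \<epsilon> B0 :: real and L :: "nat \<Rightarrow> nat \<Rightarrow> real"
    and F G :: "(nat \<Rightarrow> real) \<Rightarrow> real" and r :: "nat \<Rightarrow> int" and f :: "nat \<Rightarrow> int \<Rightarrow> real"
  assumes N1: "1 \<le> N" and sF: "0 < \<sigma>F" and sG: "0 < \<sigma>G" and KF: "0 < KF" and KG: "0 < KG"
    and Fok: "F_ok N h \<sigma>F KF F" and Gok: "G_ok m \<epsilon> \<sigma>G KG G"
    and LC: "\<forall>i<m. \<forall>k<h. \<bar>L i k\<bar> \<le> C"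
    and fb: "\<forall>j<d. \<forall>n. 1 \<le> n \<and> n \<le> int N \<longrightarrow> \<bar>f j n\<bar> \<le> 1"
    and B00: "0 \<le> B0"
    and cnt: "finite {n \<in> ibox {..<h} (real N + 1). \<forall>i\<in>{..<m}. \<bar>\<Sum>k\<in>{..<h}. L i k * real_of_int (n k)\<bar> \<le> \<epsilon> + real h * C}
      \<and> real (card {n \<in> ibox {..<h} (real N + 1). \<forall>i\<in>{..<m}. \<bar>\<Sum>k\<in>{..<h}. L i k * real_of_int (n k)\<bar> \<le> \<epsilon> + real h * C})
        \<le> B0 * (2 * (real N + 1) + 1) ^ (card {..<h} - card {..<m})"
  shows "\<bar>Tcount N m d h L \<Xi> r F G f - 1 / W * Tint N m d h L \<Xi> r F G (\<lambda>j. conv N (f j) chi)\<bar>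
     \<le> B0 * 5 ^ (h - m) * (K1 * (KF + real h * C * KG)) * (\<eta> / \<sigma>G + \<eta> / (\<sigma>F * real N))"
proof -
  define P where "P = {n \<in> ibox {..<h} (real N + 1). \<forall>i\<in>{..<m}. \<bar>\<Sum>k\<in>{..<h}. L i k * real_of_int (n k)\<bar> \<le> \<epsilon> + real h * C}"
  define \<phi> where "\<phi> x = F x * G (mv m h L x)" for x
  define Rm where "Rm = (\<Sum>j<d. \<bar>real_of_int (r j)\<bar>)"
  define A where "A = {n \<in> ibox {..<h} (K1 * (real N + Rm)). an N f r n \<noteq> 0}"
  define E where "E = K1 * \<eta> * (KF / (\<sigma>F * real N) + KG / \<sigma>G * (real h * C))"
  have F01: "\<And>x. 0 \<le> F x \<and> F x \<le> 1" and Fsupp: "\<And>x. F x \<noteq> 0 \<Longrightarrow> \<forall>k<h. \<bar>x k\<bar> \<le> real N"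
    and Flip: "\<And>x y. \<bar>F x - F y\<bar> \<le> KF / (\<sigma>F * real N) * vnorm h (\<lambda>k. x k - y k)"
    using Fok unfolding F_ok_def by blast+
  have G01: "\<And>x. 0 \<le> G x \<and> G x \<le> 1" and Gsupp: "\<And>x. G x \<noteq> 0 \<Longrightarrow> \<forall>i<m. \<bar>x i\<bar> \<le> \<epsilon>"
    and Glip: "\<And>x y. \<bar>G x - G y\<bar> \<le> KG / \<sigma>G * vnorm m (\<lambda>i. x i - y i)"
    using Gok unfolding G_ok_def by blast+
  have Nr: "real N \<ge> 1" using N1 by simp
  have eta0: "0 < \<eta>" using eta by simp
  have K1e: "K1 * \<eta> \<le> 1" "0 \<le> K1 * \<eta>" using eta K1pos by auto
  have Wpos: "W > 0"
  proof -
    have "0 < (\<eta> / (real h * C))^h" using eta0 Cpos h1 by simp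
    then show ?thesis using W_lower by linarith
  qed
  have GL: "\<bar>G (mv m h L x) - G (mv m h L y)\<bar> \<le> KG / \<sigma>G * (real h * C) * vnorm h (\<lambda>k. x k - y k)" for x y
  proof -
    have "\<bar>G (mv m h L x) - G (mv m h L y)\<bar> \<le> KG / \<sigma>G * vnorm m (\<lambda>i. mv m h L x i - mv m h L y i)" by (rule Glip)
    also have "\<dots> \<le> KG / \<sigma>G * (real h * C * vnorm h (\<lambda>k. x k - y k))"
      using KG sG by (intro mult_left_mono mv_lip[OF LC]) (use Cpos in auto)
    finally show ?thesis by (simp add: mult.assoc)
  qed
  have \<phi>_meas: "\<phi> \<in> borel_measurable MH"
  proof -
    have "F \<in> borel_measurable MH" by (rule lip_measurable[OF Flip])
    moreover have "(\<lambda>x. G (mv m h L x)) \<in> borel_measurable MH" by (rule lip_measurable[OF GL])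
    ultimately show ?thesis unfolding \<phi>_def by (intro borel_measurable_times)
  qed
  have \<phi>01: "0 \<le> \<phi> x" "\<phi> x \<le> 1" for x
    unfolding \<phi>_def using F01[of x] G01[of "mv m h L x"] by (auto intro: mult_le_one)
  have box0: "0 \<le> K1 * (real N + Rm)" using K1pos by (simp add: Rm_def sum_nonneg)
  have fA: "finite A"
  proof -
    have "finite (ibox {..<h} (K1 * (real N + Rm)))" using box_card[OF _ box0] by simp
    then show ?thesis unfolding A_def by simp
  qed
  have AL: "A \<subseteq> Lam" unfolding A_def Lam_def ibox_def by auto
  have Acov: "\<forall>n\<in>Lam. an N f r n \<noteq> 0 \<longrightarrow> n \<in> A"
  proof (intro ballI impI)
    fix n assume nL: "n \<in> Lam" and nz: "an N f r n \<noteq> 0"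
    have "\<forall>j<d. \<bar>xi h \<Xi> j (\<lambda>k. real_of_int (n k))\<bar> \<le> real N + Rm"
    proof (intro allI impI)
      fix j assume j: "j < d"
      have "zext N (f j) ((\<Sum>k<h. \<Xi> j k * n k) + r j) \<noteq> 0"
        using nz j unfolding an_def by auto
      then have rng: "1 \<le> (\<Sum>k<h. \<Xi> j k * n k) + r j" "(\<Sum>k<h. \<Xi> j k * n k) + r j \<le> int N"
        unfolding zext_def by (auto split: if_splits)
      have rj: "\<bar>real_of_int (r j)\<bar> \<le> Rm" unfolding Rm_def using j
        by (intro member_le_sum) auto
      have "\<bar>real_of_int (\<Sum>k<h. \<Xi> j k * n k)\<bar> \<le> real N + \<bar>real_of_int (r j)\<bar>"
        using rng by (rule int_range_real)
      then show "\<bar>xi h \<Xi> j (\<lambda>k. real_of_int (n k))\<bar> \<le> real N + Rm" unfolding xi_int using rj by linarith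
    qed
    then have "\<forall>k<h. \<bar>real_of_int (n k)\<bar> \<le> K1 * (real N + Rm)" using P1 by blast
    then have "n \<in> ibox {..<h} (K1 * (real N + Rm))" using nL by (auto simp: ibox_def Lam_def)
    then show "n \<in> A" using nz by (simp add: A_def)
  qed
  have T1: "Tcount N m d h L \<Xi> r F G f = (1 / real N ^ (h - m)) * (\<Sum>n\<in>A. an N f r n * \<phi> (\<lambda>k. real_of_int (n k)))"
  proof -
    have "infsum (\<lambda>n::nat \<Rightarrow> int. (\<Prod>j<d. zext N (f j) ((\<Sum>k<h. \<Xi> j k * n k) + r j))
        * F (\<lambda>k. real_of_int (n k)) * G (mv m h L (\<lambda>k. real_of_int (n k)))) {n. \<forall>k\<ge>h. n k = 0}
      = infsum (\<lambda>n. an N f r n * \<phi> (\<lambda>k. real_of_int (n k))) A"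
    proof (rule infsum_cong_neutral)
      fix n assume "n \<in> A - {n. \<forall>k\<ge>h. n k = 0}"
      then show "an N f r n * \<phi> (\<lambda>k. real_of_int (n k)) = 0" using AL by (auto simp: Lam_def)
    next
      fix n assume "n \<in> {n. \<forall>k\<ge>h. n k = 0} - A"
      then have "an N f r n = 0" using Acov by (auto simp: Lam_def)
      then show "(\<Prod>j<d. zext N (f j) ((\<Sum>k<h. \<Xi> j k * n k) + r j)) * F (\<lambda>k. real_of_int (n k)) * G (mv m h L (\<lambda>k. real_of_int (n k))) = 0"
        by (simp add: an_def)
    next
      fix n show "(\<Prod>j<d. zext N (f j) ((\<Sum>k<h. \<Xi> j k * n k) + r j)) * F (\<lambda>k. real_of_int (n k)) * G (mv m h L (\<lambda>k. real_of_int (n k)))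
        = an N f r n * \<phi> (\<lambda>k. real_of_int (n k))" by (simp add: an_def \<phi>_def mult.assoc)
    qed
    also have "\<dots> = (\<Sum>n\<in>A. an N f r n * \<phi> (\<lambda>k. real_of_int (n k)))" using fA by simp
    finally show ?thesis unfolding Tcount_def by simp
  qed
  have ib: "integrable MH (\<lambda>x. psi (\<lambda>k. x k - v k))" for v
    by (rule integrable_boxbound[OF psi_shift_meas K1e(2) psi_shift_box])
  have ig: "integrable MH (\<lambda>x. psi (\<lambda>k. x k - v k) * \<phi> x)" for v
  proof (rule integrable_boxbound[OF _ K1e(2)])
    show "(\<lambda>x. psi (\<lambda>k. x k - v k) * \<phi> x) \<in> borel_measurable MH"
      by (intro borel_measurable_times psi_shift_meas \<phi>_meas)
    fix x assume x: "x \<in> space MH"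
    have "\<bar>psi (\<lambda>k. x k - v k) * \<phi> x\<bar> \<le> \<bar>psi (\<lambda>k. x k - v k)\<bar>"
      using \<phi>01[of x] unfolding abs_mult by (simp add: mult_left_le)
    also have "\<dots> \<le> 1 * indicator (Pi\<^sub>E {..<h} (\<lambda>k. {v k - K1*\<eta>..v k + K1*\<eta>})) x" by (rule psi_shift_box[OF x])
    finally show "\<bar>psi (\<lambda>k. x k - v k) * \<phi> x\<bar> \<le> 1 * indicator (Pi\<^sub>E {..<h} (\<lambda>k. {v k - K1*\<eta>..v k + K1*\<eta>})) x" .
  qed
  have T2: "Tint N m d h L \<Xi> r F G (\<lambda>j. conv N (f j) chi) = (1 / real N ^ (h - m)) *
      (\<Sum>n\<in>A. an N f r n * (\<integral>x. psi (\<lambda>k. x k - real_of_int (n k)) * \<phi> x \<partial>MH))"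
  proof -
    have "(\<integral>x. (\<Prod>j<d. conv N (f j) chi ((\<Sum>k<h. real_of_int (\<Xi> j k) * x k) + real_of_int (r j))) * F x * G (mv m h L x) \<partial>MH)
        = (\<integral>x. (\<Sum>n\<in>A. an N f r n * (psi (\<lambda>k. x k - real_of_int (n k)) * \<phi> x)) \<partial>MH)"
    proof (rule Bochner_Integration.integral_cong[OF refl])
      fix x
      have "(\<Prod>j<d. conv N (f j) chi (xi h \<Xi> j x + real_of_int (r j)))
         = (\<Sum>n\<in>A. an N f r n * psi (\<lambda>k. x k - real_of_int (n k)))" by (rule pointwise[OF fA AL Acov])
      then show "(\<Prod>j<d. conv N (f j) chi ((\<Sum>k<h. real_of_int (\<Xi> j k) * x k) + real_of_int (r j))) * F x * G (mv m h L x)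
        = (\<Sum>n\<in>A. an N f r n * (psi (\<lambda>k. x k - real_of_int (n k)) * \<phi> x))"
        unfolding xi_def \<phi>_def by (simp add: sum_distrib_right mult.assoc)
    qed
    also have "\<dots> = (\<Sum>n\<in>A. (\<integral>x. an N f r n * (psi (\<lambda>k. x k - real_of_int (n k)) * \<phi> x) \<partial>MH))"
      by (rule Bochner_Integration.integral_sum) (use ig in auto)
    also have "\<dots> = (\<Sum>n\<in>A. an N f r n * (\<integral>x. psi (\<lambda>k. x k - real_of_int (n k)) * \<phi> x \<partial>MH))"
      by simp
    finally show ?thesis unfolding Tint_def by simp
  qed
  have trm: "\<bar>\<phi> (\<lambda>k. real_of_int (n k)) - 1 / W * (\<integral>x. psi (\<lambda>k. x k - real_of_int (n k)) * \<phi> x \<partial>MH)\<bar>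
      \<le> (if n \<in> P then E else 0)" if nA: "n \<in> A" for n
  proof -
    define v where "v = (\<lambda>k. real_of_int (n k))"
    define Eb where "Eb = (if n \<in> P then E else 0)"
    have nL: "n \<in> Lam" using nA AL by blast
    have pb: "\<bar>psi (\<lambda>k. x k - v k) * (\<phi> v - \<phi> x)\<bar> \<le> psi (\<lambda>k. x k - v k) * Eb" if x: "x \<in> space MH" for x
    proof (cases "psi (\<lambda>k. x k - v k) = 0")
      case True then show ?thesis by simp
    next
      case False
      have cl: "\<forall>k<h. \<bar>x k - v k\<bar> \<le> K1 * \<eta>" using psi_nz(2)[OF False] by simp
      have vn: "vnorm h (\<lambda>k. v k - x k) \<le> K1 * \<eta>"
        using cl K1e by (intro vnorm_le) (auto simp: abs_minus_commute)
      have diff: "\<bar>\<phi> v - \<phi> x\<bar> \<le> Eb"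
      proof (cases "n \<in> P")
        case True
        have "\<bar>\<phi> v - \<phi> x\<bar> \<le> \<bar>F v - F x\<bar> + \<bar>G (mv m h L v) - G (mv m h L x)\<bar>"
        proof -
          have "\<phi> v - \<phi> x = (F v - F x) * G (mv m h L v) + F x * (G (mv m h L v) - G (mv m h L x))"
            unfolding \<phi>_def by (simp add: algebra_simps)
          then have "\<bar>\<phi> v - \<phi> x\<bar> \<le> \<bar>(F v - F x) * G (mv m h L v)\<bar> + \<bar>F x * (G (mv m h L v) - G (mv m h L x))\<bar>"
            by (simp only: abs_triangle_ineq)
          also have "\<dots> = \<bar>F v - F x\<bar> * \<bar>G (mv m h L v)\<bar> + \<bar>F x\<bar> * \<bar>G (mv m h L v) - G (mv m h L x)\<bar>"
            by (simp only: abs_mult)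
          also have "\<dots> \<le> \<bar>F v - F x\<bar> * 1 + 1 * \<bar>G (mv m h L v) - G (mv m h L x)\<bar>"
            using F01[of x] G01[of "mv m h L v"] by (intro add_mono mult_left_mono mult_right_mono) auto
          finally show ?thesis by simp
        qed
        also have "\<dots> \<le> KF / (\<sigma>F * real N) * (K1 * \<eta>) + KG / \<sigma>G * (real h * C) * (K1 * \<eta>)"
        proof (intro add_mono)
          show "\<bar>F v - F x\<bar> \<le> KF / (\<sigma>F * real N) * (K1 * \<eta>)"
          proof -
            have c0: "0 \<le> KF / (\<sigma>F * real N)" using KF sF Nr by simp
            have "KF / (\<sigma>F * real N) * vnorm h (\<lambda>k. v k - x k) \<le> KF / (\<sigma>F * real N) * (K1 * \<eta>)"
              by (rule mult_left_mono[OF vn c0])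
            then show ?thesis using Flip[of v x] by linarith
          qed
          have "0 \<le> KG / \<sigma>G * (real h * C)" using KG sG Cpos by simp
          show "\<bar>G (mv m h L v) - G (mv m h L x)\<bar> \<le> KG / \<sigma>G * (real h * C) * (K1 * \<eta>)"
          proof -
            have "KG / \<sigma>G * (real h * C) * vnorm h (\<lambda>k. v k - x k) \<le> KG / \<sigma>G * (real h * C) * (K1 * \<eta>)"
              by (rule mult_left_mono[OF vn]) fact
            then show ?thesis using GL[of v x] by linarith
          qed
        qed
        also have "\<dots> = E" unfolding E_def by (simp add: algebra_simps)
        finally show ?thesis using True by (simp add: Eb_def)
      next
        case False
        have "\<phi> v = 0"
        proof (rule ccontr)
          assume "\<phi> v \<noteq> 0"
          then have "F v \<noteq> 0" "G (mv m h L v) \<noteq> 0" unfolding \<phi>_def by auto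
          then have a: "\<forall>k<h. \<bar>v k\<bar> \<le> real N" "\<forall>i<m. \<bar>mv m h L v i\<bar> \<le> \<epsilon>" using Fsupp Gsupp by auto
          have "n \<in> P" unfolding P_def ibox_def
          proof (intro CollectI conjI allI impI ballI)
            fix k assume "k \<notin> {..<h}" then show "n k = 0" using nL by (simp add: Lam_def)
          next
            fix k assume "k \<in> {..<h}" then show "\<bar>real_of_int (n k)\<bar> \<le> real N + 1" using a(1) by (auto simp: v_def)
          next
            fix i assume i: "i \<in> {..<m}"
            then have "\<bar>\<Sum>k\<in>{..<h}. L i k * real_of_int (n k)\<bar> \<le> \<epsilon>" using a(2) by (simp add: mv_def v_def)
            moreover have "0 \<le> real h * C" using Cpos by simp
            ultimately show "\<bar>\<Sum>k\<in>{..<h}. L i k * real_of_int (n k)\<bar> \<le> \<epsilon> + real h * C" by linarith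
          qed
          then show False using False by simp
        qed
        moreover have "\<phi> x = 0"
        proof (rule ccontr)
          assume "\<phi> x \<noteq> 0"
          then have "F x \<noteq> 0" "G (mv m h L x) \<noteq> 0" unfolding \<phi>_def by auto
          then have a: "\<forall>k<h. \<bar>x k\<bar> \<le> real N" "\<forall>i<m. \<bar>mv m h L x i\<bar> \<le> \<epsilon>" using Fsupp Gsupp by auto
          have "n \<in> P" unfolding P_def ibox_def
          proof (intro CollectI conjI allI impI ballI)
            fix k assume "k \<notin> {..<h}" then show "n k = 0" using nL by (simp add: Lam_def)
          next
            fix k assume "k \<in> {..<h}"
            then have "\<bar>x k\<bar> \<le> real N" "\<bar>x k - v k\<bar> \<le> K1 * \<eta>" using a(1) cl by auto
            then show "\<bar>real_of_int (n k)\<bar> \<le> real N + 1" using K1e unfolding v_def by linarith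
          next
            fix i assume i: "i \<in> {..<m}"
            have "\<bar>mv m h L v i - mv m h L x i\<bar> \<le> vnorm m (\<lambda>i. mv m h L v i - mv m h L x i)"
              using i by (intro vnorm_ge) simp
            also have "\<dots> \<le> real h * C * vnorm h (\<lambda>k. v k - x k)" by (rule mv_lip[OF LC]) (use Cpos in simp)
            also have "\<dots> \<le> real h * C * (K1 * \<eta>)" using vn Cpos by (intro mult_left_mono) auto
            also have "\<dots> \<le> real h * C * 1" using K1e Cpos by (intro mult_left_mono) auto
            finally have "\<bar>mv m h L v i - mv m h L x i\<bar> \<le> real h * C" by simp
            moreover have "\<bar>mv m h L x i\<bar> \<le> \<epsilon>" using a(2) i by simp
            ultimately have "\<bar>mv m h L v i\<bar> \<le> \<epsilon> + real h * C" by linarith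
            then show "\<bar>\<Sum>k\<in>{..<h}. L i k * real_of_int (n k)\<bar> \<le> \<epsilon> + real h * C"
              using i by (simp add: mv_def v_def)
          qed
          then show False using False by simp
        qed
        ultimately show ?thesis using False by (simp add: Eb_def)
      qed
      have "\<bar>psi (\<lambda>k. x k - v k) * (\<phi> v - \<phi> x)\<bar> = psi (\<lambda>k. x k - v k) * \<bar>\<phi> v - \<phi> x\<bar>"
        using psi01 by (simp add: abs_mult)
      also have "\<dots> \<le> psi (\<lambda>k. x k - v k) * Eb" using diff psi01 by (intro mult_left_mono) auto
      finally show ?thesis .
    qed
    have Wn: "(\<integral>x. psi (\<lambda>k. x k - v k) \<partial>MH) = W" by (rule W_shift)
    have "\<phi> v - 1 / W * (\<integral>x. psi (\<lambda>k. x k - v k) * \<phi> x \<partial>MH)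
        = 1 / W * ((\<integral>x. psi (\<lambda>k. x k - v k) * \<phi> v \<partial>MH) - (\<integral>x. psi (\<lambda>k. x k - v k) * \<phi> x \<partial>MH))"
      using Wn Wpos by (simp add: field_simps)
    also have "\<dots> = 1 / W * (\<integral>x. psi (\<lambda>k. x k - v k) * (\<phi> v - \<phi> x) \<partial>MH)"
    proof -
      have "(\<integral>x. psi (\<lambda>k. x k - v k) * \<phi> v \<partial>MH) - (\<integral>x. psi (\<lambda>k. x k - v k) * \<phi> x \<partial>MH)
          = (\<integral>x. psi (\<lambda>k. x k - v k) * \<phi> v - psi (\<lambda>k. x k - v k) * \<phi> x \<partial>MH)"
        using ib[of v] ig[of v] by (intro Bochner_Integration.integral_diff[symmetric]) auto
      then show ?thesis by (simp add: right_diff_distrib)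
    qed
    finally have eq: "\<phi> v - 1 / W * (\<integral>x. psi (\<lambda>k. x k - v k) * \<phi> x \<partial>MH) = 1 / W * (\<integral>x. psi (\<lambda>k. x k - v k) * (\<phi> v - \<phi> x) \<partial>MH)" .
    have "\<bar>\<integral>x. psi (\<lambda>k. x k - v k) * (\<phi> v - \<phi> x) \<partial>MH\<bar> \<le> (\<integral>x. psi (\<lambda>k. x k - v k) * Eb \<partial>MH)"
    proof (rule abs_int_bound)
      show "integrable MH (\<lambda>x. psi (\<lambda>k. x k - v k) * (\<phi> v - \<phi> x))"
        using ib[of v] ig[of v] by (simp add: right_diff_distrib)
      show "integrable MH (\<lambda>x. psi (\<lambda>k. x k - v k) * Eb)" using ib[of v] by simp
    qed (rule pb)
    also have "\<dots> = W * Eb" using Wn by simp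
    finally have I: "\<bar>\<integral>x. psi (\<lambda>k. x k - v k) * (\<phi> v - \<phi> x) \<partial>MH\<bar> \<le> W * Eb" .
    have "\<bar>\<phi> v - 1 / W * (\<integral>x. psi (\<lambda>k. x k - v k) * \<phi> x \<partial>MH)\<bar>
        = 1 / W * \<bar>\<integral>x. psi (\<lambda>k. x k - v k) * (\<phi> v - \<phi> x) \<partial>MH\<bar>"
      unfolding eq using Wpos by (simp add: abs_mult)
    also have "\<dots> \<le> 1 / W * (W * Eb)" using I Wpos by (intro mult_left_mono) auto
    finally have "\<bar>\<phi> v - 1 / W * (\<integral>x. psi (\<lambda>k. x k - v k) * \<phi> x \<partial>MH)\<bar> \<le> 1 / W * (W * Eb)" .
    then show ?thesis using Wpos unfolding v_def Eb_def by simp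
  qed
  have E0: "0 \<le> E" unfolding E_def using K1pos eta0 KF KG sF sG Cpos Nr by simp
  have fP: "finite P" using cnt unfolding P_def by simp
  have cP: "real (card P) \<le> B0 * (2 * (real N + 1) + 1) ^ (h - m)" using cnt unfolding P_def by simp
  have "Tcount N m d h L \<Xi> r F G f - 1 / W * Tint N m d h L \<Xi> r F G (\<lambda>j. conv N (f j) chi)
      = (1 / real N ^ (h - m)) * (\<Sum>n\<in>A. an N f r n * (\<phi> (\<lambda>k. real_of_int (n k)) - 1 / W * (\<integral>x. psi (\<lambda>k. x k - real_of_int (n k)) * \<phi> x \<partial>MH)))"
    unfolding T1 T2 by (simp add: sum_distrib_left right_diff_distrib sum_subtractf algebra_simps)
  also have "\<bar>\<dots>\<bar> \<le> (1 / real N ^ (h - m)) * (\<Sum>n\<in>A. (if n \<in> P then E else 0))"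
  proof -
    have "\<bar>\<Sum>n\<in>A. an N f r n * (\<phi> (\<lambda>k. real_of_int (n k)) - 1 / W * (\<integral>x. psi (\<lambda>k. x k - real_of_int (n k)) * \<phi> x \<partial>MH))\<bar>
        \<le> (\<Sum>n\<in>A. \<bar>an N f r n * (\<phi> (\<lambda>k. real_of_int (n k)) - 1 / W * (\<integral>x. psi (\<lambda>k. x k - real_of_int (n k)) * \<phi> x \<partial>MH))\<bar>)"
      by (rule sum_abs)
    also have "\<dots> \<le> (\<Sum>n\<in>A. (if n \<in> P then E else 0))"
    proof (rule sum_mono)
      fix n assume nA: "n \<in> A"
      have "\<bar>an N f r n * (\<phi> (\<lambda>k. real_of_int (n k)) - 1 / W * (\<integral>x. psi (\<lambda>k. x k - real_of_int (n k)) * \<phi> x \<partial>MH))\<bar>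
          \<le> 1 * (if n \<in> P then E else 0)"
        unfolding abs_mult using an_bound[OF fb] trm[OF nA] E0 by (intro mult_mono) auto
      then show "\<bar>an N f r n * (\<phi> (\<lambda>k. real_of_int (n k)) - 1 / W * (\<integral>x. psi (\<lambda>k. x k - real_of_int (n k)) * \<phi> x \<partial>MH))\<bar>
          \<le> (if n \<in> P then E else 0)" by simp
    qed
    finally have S: "\<bar>\<Sum>n\<in>A. an N f r n * (\<phi> (\<lambda>k. real_of_int (n k)) - 1 / W * (\<integral>x. psi (\<lambda>k. x k - real_of_int (n k)) * \<phi> x \<partial>MH))\<bar>
        \<le> (\<Sum>n\<in>A. (if n \<in> P then E else 0))" .
    have pN: "0 < 1 / real N ^ (h - m)" using Nr by simp
    show ?thesis by (rule abs_scale_le[OF pN S])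
  qed
  also have "(\<Sum>n\<in>A. (if n \<in> P then E else 0)) = E * real (card (A \<inter> P))"
    using fA by (simp add: sum.If_cases Int_commute)
  also have "(1 / real N ^ (h - m)) * (E * real (card (A \<inter> P))) \<le> (1 / real N ^ (h - m)) * (E * (B0 * (5 * real N) ^ (h - m)))"
  proof -
    have "real (card (A \<inter> P)) \<le> real (card P)" using fP by (simp add: card_mono)
    also have "\<dots> \<le> B0 * (2 * (real N + 1) + 1) ^ (h - m)" by (rule cP)
    also have "\<dots> \<le> B0 * (5 * real N) ^ (h - m)"
      using Nr B00 by (intro mult_left_mono power_mono) auto
    finally show ?thesis using E0 Nr by (intro mult_left_mono) auto
  qed
  also have "(1 / real N ^ (h - m)) * (E * (B0 * (5 * real N) ^ (h - m))) = E * B0 * 5 ^ (h - m)"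
    using Nr by (simp add: power_mult_distrib)
  also have "E * B0 * 5 ^ (h - m) \<le> B0 * 5 ^ (h - m) * (K1 * (KF + real h * C * KG)) * (\<eta> / \<sigma>G + \<eta> / (\<sigma>F * real N))"
  proof -
    have "E \<le> K1 * (KF + real h * C * KG) * (\<eta> / \<sigma>G + \<eta> / (\<sigma>F * real N))"
    proof -
      have "K1 * (KF + real h * C * KG) * (\<eta> / \<sigma>G + \<eta> / (\<sigma>F * real N)) - E
          = K1 * KF * (\<eta> / \<sigma>G) + K1 * (real h * C * KG) * (\<eta> / (\<sigma>F * real N))"
        unfolding E_def by (simp add: algebra_simps)
      moreover have "0 \<le> K1 * KF * (\<eta> / \<sigma>G) + K1 * (real h * C * KG) * (\<eta> / (\<sigma>F * real N))"
        using K1pos KF KG eta0 sF sG Cpos Nr by simp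
      ultimately show ?thesis by linarith
    qed
    moreover have Y: "0 \<le> B0 * 5 ^ (h - m)" using B00 by simp
    ultimately have "E * (B0 * 5 ^ (h - m)) \<le> (K1 * (KF + real h * C * KG) * (\<eta> / \<sigma>G + \<eta> / (\<sigma>F * real N))) * (B0 * 5 ^ (h - m))"
      by (rule mult_right_mono)
    then show ?thesis by (simp add: mult_ac)
  qed
  finally show ?thesis .
qed

end


theorem lemma5p4:
  fixes m d h :: nat and C :: real
  assumes "m + 2 \<le> h" and "h \<le> d" and "0 < C"
  shows "\<exists>K>0. \<forall>\<epsilon>>0. \<exists>\<eta>0>0. \<forall>c>0. \<forall>KF>0. \<forall>KG>0. \<forall>R>0. \<exists>B.
    \<forall>\<eta>. 0 < \<eta> \<and> \<eta> < \<eta>0 \<longrightarrow>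
    (\<forall>\<Xi> chi. Xi_ok d h C \<Xi> \<and> chi \<in> borel_measurable borel \<and> (\<forall>x. 0 \<le> chi x \<and> chi x \<le> 1)
        \<and> eta_supported \<eta> chi \<longrightarrow>
      (\<exists>CX. 1 / K \<le> CX \<and> CX \<le> K \<and>
        (\<forall>N \<sigma>F \<sigma>G L F G r f.
           1 \<le> N \<and> 0 < \<sigma>F \<and> 0 < \<sigma>G \<and> L_ok m h c C L \<and> F_ok N h \<sigma>F KF F \<and> G_ok m \<epsilon> \<sigma>G KG G
           \<and> (\<forall>j<d. \<bar>real_of_int (r j)\<bar> \<le> R)
           \<and> (\<forall>j<d. \<forall>n. 1 \<le> n \<and> n \<le> int N \<longrightarrow> \<bar>f j n\<bar> \<le> 1) \<longrightarrow>
           \<bar>Tcount N m d h L \<Xi> r F G f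
             - 1 / (CX * \<eta> ^ h) * Tint N m d h L \<Xi> r F G (\<lambda>j. conv N (f j) chi)\<bar>
           \<le> B * (\<eta> / \<sigma>G + \<eta> / (\<sigma>F * real N)))))"
proof -
  have Cpos: "0 < C" and h1: "h \<ge> 1" using assms by auto
  define C1 where "C1 = max 1 C"
  have C11: "C1 \<ge> 1" "C \<le> C1" by (auto simp: C1_def)
  from xi_struct[OF C11(1), of h] obtain K1 \<delta> :: real where H: "K1 > 0 \<and> \<delta> > 0 \<and>
    (\<forall>(J::nat set) (I::nat set) (A :: nat \<Rightarrow> nat \<Rightarrow> real). finite J \<longrightarrow> finite I \<longrightarrow> card I = h \<longrightarrow>
      (\<forall>j\<in>J. \<forall>k\<in>I. A j k \<in> \<int> \<and> \<bar>A j k\<bar> \<le> C1) \<longrightarrow>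
      (\<forall>x. (\<forall>j\<in>J. (\<Sum>k\<in>I. A j k * x k) = 0) \<longrightarrow> (\<forall>k\<in>I. x k = 0)) \<longrightarrow>
      (\<forall>x t. (\<forall>j\<in>J. \<bar>\<Sum>k\<in>I. A j k * x k\<bar> \<le> t) \<longrightarrow> (\<forall>k\<in>I. \<bar>x k\<bar> \<le> K1 * t)) \<and>
      (\<forall>x b. (\<forall>j\<in>J. b j \<in> \<int> \<and> \<bar>(\<Sum>k\<in>I. A j k * x k) - b j\<bar> \<le> \<delta>) \<longrightarrow>
         (\<exists>y. \<forall>j\<in>J. (\<Sum>k\<in>I. A j k * y k) = b j)))"
    by (elim exE) (erule that)
  have K1pos: "K1 > 0" and dpos: "\<delta> > 0" using H by auto
  note XS = H[THEN conjunct2, THEN conjunct2]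
  have XiP: "(\<forall>y t. (\<forall>j<d. \<bar>xi h \<Xi> j y\<bar> \<le> t) \<longrightarrow> (\<forall>k<h. \<bar>y k\<bar> \<le> K1 * t)) \<and>
    (\<forall>y b. (\<forall>j<d. b j \<in> \<int> \<and> \<bar>xi h \<Xi> j y - b j\<bar> \<le> \<delta>) \<longrightarrow> (\<exists>z. \<forall>j<d. xi h \<Xi> j z = b j))"
    if Xi: "Xi_ok d h C \<Xi>" for \<Xi>
  proof -
    have ent: "\<forall>j\<in>{..<d}. \<forall>k\<in>{..<h}. realmat \<Xi> j k \<in> \<int> \<and> \<bar>realmat \<Xi> j k\<bar> \<le> C1"
    proof (intro ballI conjI)
      fix j k assume j: "j \<in> {..<d}" and k: "k \<in> {..<h}"
      show "realmat \<Xi> j k \<in> \<int>" by (simp add: realmat_def)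
      have "\<bar>real_of_int (\<Xi> j k)\<bar> \<le> C" using Xi j k unfolding Xi_ok_def by simp
      then show "\<bar>realmat \<Xi> j k\<bar> \<le> C1" using C11 by (simp add: realmat_def)
    qed
    have inj: "\<forall>x. (\<forall>j\<in>{..<d}. (\<Sum>k\<in>{..<h}. realmat \<Xi> j k * x k) = 0) \<longrightarrow> (\<forall>k\<in>{..<h}. x k = 0)"
    proof (intro allI impI ballI)
      fix x k assume hx: "\<forall>j\<in>{..<d}. (\<Sum>k\<in>{..<h}. realmat \<Xi> j k * x k) = 0" and k: "k \<in> {..<h}"
      define x' where "x' k = (if k < h then x k else 0)" for k
      have x'v: "x' \<in> vecs h" by (simp add: vecs_def x'_def)
      have zv: "(\<lambda>_. 0) \<in> vecs h" by (simp add: vecs_def)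
      have "mv d h (realmat \<Xi>) x' = mv d h (realmat \<Xi>) (\<lambda>_. 0)"
      proof
        fix i
        have "(\<Sum>k<h. realmat \<Xi> i k * x' k) = (\<Sum>k<h. realmat \<Xi> i k * x k)" by (simp add: x'_def)
        then show "mv d h (realmat \<Xi>) x' i = mv d h (realmat \<Xi>) (\<lambda>_. 0) i"
          using hx by (simp add: mv_def)
      qed
      then have "x' = (\<lambda>_. 0)" using Xi x'v zv unfolding Xi_ok_def inj_on_def by blast
      then show "x k = 0" using k by (metis x'_def lessThan_iff)
    qed
    have R: "(\<forall>x t. (\<forall>j\<in>{..<d}. \<bar>\<Sum>k\<in>{..<h}. realmat \<Xi> j k * x k\<bar> \<le> t) \<longrightarrow> (\<forall>k\<in>{..<h}. \<bar>x k\<bar> \<le> K1 * t)) \<and>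
      (\<forall>x b. (\<forall>j\<in>{..<d}. b j \<in> \<int> \<and> \<bar>(\<Sum>k\<in>{..<h}. realmat \<Xi> j k * x k) - b j\<bar> \<le> \<delta>) \<longrightarrow>
         (\<exists>y. \<forall>j\<in>{..<d}. (\<Sum>k\<in>{..<h}. realmat \<Xi> j k * y k) = b j))"
      using XS[THEN spec[of _ "{..<d}"], THEN spec[of _ "{..<h}"], THEN spec[of _ "realmat \<Xi>"],
          THEN mp, THEN mp, THEN mp, THEN mp, THEN mp, OF finite_lessThan finite_lessThan card_lessThan ent inj] .
    have xe: "xi h \<Xi> j y = (\<Sum>k\<in>{..<h}. realmat \<Xi> j k * y k)" for j y
      by (simp add: xi_def realmat_def)
    show ?thesis
    proof (intro conjI allI impI)
      fix y t k assume a: "\<forall>j<d. \<bar>xi h \<Xi> j y\<bar> \<le> t" and k: "k < h"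
      have "\<forall>j\<in>{..<d}. \<bar>\<Sum>k\<in>{..<h}. realmat \<Xi> j k * y k\<bar> \<le> t" using a unfolding xe by simp
      then have "\<forall>k\<in>{..<h}. \<bar>y k\<bar> \<le> K1 * t" using R[THEN conjunct1, THEN spec[of _ y], THEN spec[of _ t]] by blast
      then show "\<bar>y k\<bar> \<le> K1 * t" using k by simp
    next
      fix y b assume a: "\<forall>j<d. b j \<in> \<int> \<and> \<bar>xi h \<Xi> j y - b j\<bar> \<le> \<delta>"
      have "\<forall>j\<in>{..<d}. b j \<in> \<int> \<and> \<bar>(\<Sum>k\<in>{..<h}. realmat \<Xi> j k * y k) - b j\<bar> \<le> \<delta>" using a unfolding xe by simp
      then obtain z where "\<forall>j\<in>{..<d}. (\<Sum>k\<in>{..<h}. realmat \<Xi> j k * z k) = b j"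
        using R[THEN conjunct2, THEN spec[of _ y], THEN spec[of _ b]] by blast
      then show "\<exists>z. \<forall>j<d. xi h \<Xi> j z = b j" unfolding xe by auto
    qed
  qed
  define K where "K = max ((real h * C)^h) ((2 * K1)^h) + 1"
  have Kpos: "K > 0"
  proof -
    have "0 \<le> (real h * C)^h" using Cpos by simp
    then have "0 \<le> max ((real h * C)^h) ((2 * K1)^h)" by (rule order_trans) simp
    then show ?thesis unfolding K_def by linarith
  qed
  show ?thesis
  proof (rule exI[of _ K], intro conjI allI impI Kpos)
    fix \<epsilon> :: real assume \<epsilon>: "\<epsilon> > 0"
    define \<eta>0 where "\<eta>0 = min (1/4) (min \<delta> (1 / K1))"
    have \<eta>0pos: "\<eta>0 > 0" using dpos K1pos by (simp add: \<eta>0_def)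
    show "\<exists>\<eta>0>0. \<forall>c>0. \<forall>KF>0. \<forall>KG>0. \<forall>R>0. \<exists>B.
    \<forall>\<eta>. 0 < \<eta> \<and> \<eta> < \<eta>0 \<longrightarrow>
    (\<forall>\<Xi> chi. Xi_ok d h C \<Xi> \<and> chi \<in> borel_measurable borel \<and> (\<forall>x. 0 \<le> chi x \<and> chi x \<le> 1)
        \<and> eta_supported \<eta> chi \<longrightarrow>
      (\<exists>CX. 1 / K \<le> CX \<and> CX \<le> K \<and>
        (\<forall>N \<sigma>F \<sigma>G L F G r f.
           1 \<le> N \<and> 0 < \<sigma>F \<and> 0 < \<sigma>G \<and> L_ok m h c C L \<and> F_ok N h \<sigma>F KF F \<and> G_ok m \<epsilon> \<sigma>G KG G
           \<and> (\<forall>j<d. \<bar>real_of_int (r j)\<bar> \<le> R)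
           \<and> (\<forall>j<d. \<forall>n. 1 \<le> n \<and> n \<le> int N \<longrightarrow> \<bar>f j n\<bar> \<le> 1) \<longrightarrow>
           \<bar>Tcount N m d h L \<Xi> r F G f
             - 1 / (CX * \<eta> ^ h) * Tint N m d h L \<Xi> r F G (\<lambda>j. conv N (f j) chi)\<bar>
           \<le> B * (\<eta> / \<sigma>G + \<eta> / (\<sigma>F * real N)))))"
    proof (rule exI[of _ \<eta>0], intro conjI allI impI \<eta>0pos)
      fix c KF KG R :: real assume c: "c > 0" and KF: "KF > 0" and KG: "KG > 0" and R: "R > 0"
      have e0: "0 \<le> \<epsilon> + real h * C" using \<epsilon> Cpos by simp
      from count_robust[OF c e0, of m C] obtain B0 where HB: "B0 \<ge> 0 \<and> (\<forall>(Rs::nat set) (I::nat set) (L::nat\<Rightarrow>nat\<Rightarrow>real) N'.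
         finite Rs \<longrightarrow> finite I \<longrightarrow> card Rs = m \<longrightarrow> N' \<ge> 0 \<longrightarrow> (\<forall>i\<in>Rs. \<forall>k\<in>I. \<bar>L i k\<bar> \<le> C) \<longrightarrow>
         (\<forall>y t. t \<ge> 0 \<longrightarrow> (\<forall>k\<in>I. \<bar>\<Sum>i\<in>Rs. y i * L i k\<bar> \<le> t) \<longrightarrow> (\<forall>i\<in>Rs. c * \<bar>y i\<bar> \<le> t)) \<longrightarrow>
         finite {n \<in> ibox I N'. \<forall>i\<in>Rs. \<bar>\<Sum>k\<in>I. L i k * real_of_int (n k)\<bar> \<le> \<epsilon> + real h * C} \<and>
         real (card {n \<in> ibox I N'. \<forall>i\<in>Rs. \<bar>\<Sum>k\<in>I. L i k * real_of_int (n k)\<bar> \<le> \<epsilon> + real h * C}) \<le> B0 * (2*N'+1)^(card I - card Rs))"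
        by (elim exE) (erule that)
      have B00: "B0 \<ge> 0" using HB by simp
      note CNT = HB[THEN conjunct2]
      show "\<exists>B. \<forall>\<eta>. 0 < \<eta> \<and> \<eta> < \<eta>0 \<longrightarrow>
    (\<forall>\<Xi> chi. Xi_ok d h C \<Xi> \<and> chi \<in> borel_measurable borel \<and> (\<forall>x. 0 \<le> chi x \<and> chi x \<le> 1)
        \<and> eta_supported \<eta> chi \<longrightarrow>
      (\<exists>CX. 1 / K \<le> CX \<and> CX \<le> K \<and>
        (\<forall>N \<sigma>F \<sigma>G L F G r f.
           1 \<le> N \<and> 0 < \<sigma>F \<and> 0 < \<sigma>G \<and> L_ok m h c C L \<and> F_ok N h \<sigma>F KF F \<and> G_ok m \<epsilon> \<sigma>G KG G
           \<and> (\<forall>j<d. \<bar>real_of_int (r j)\<bar> \<le> R)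
           \<and> (\<forall>j<d. \<forall>n. 1 \<le> n \<and> n \<le> int N \<longrightarrow> \<bar>f j n\<bar> \<le> 1) \<longrightarrow>
           \<bar>Tcount N m d h L \<Xi> r F G f
             - 1 / (CX * \<eta> ^ h) * Tint N m d h L \<Xi> r F G (\<lambda>j. conv N (f j) chi)\<bar>
           \<le> B * (\<eta> / \<sigma>G + \<eta> / (\<sigma>F * real N)))))"
      proof (rule exI[of _ "B0 * 5 ^ (h - m) * (K1 * (KF + real h * C * KG))"], intro allI impI)
        fix \<eta> :: real and \<Xi> chi assume \<eta>: "0 < \<eta> \<and> \<eta> < \<eta>0"
          and hyp: "Xi_ok d h C \<Xi> \<and> chi \<in> borel_measurable borel \<and> (\<forall>x. 0 \<le> chi x \<and> chi x \<le> 1) \<and> eta_supported \<eta> chi"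
        have Xi: "Xi_ok d h C \<Xi>" using hyp by blast
        have eta: "0 < \<eta>" "\<eta> \<le> 1/4" "\<eta> \<le> \<delta>" "K1 * \<eta> \<le> 1"
        proof -
          show "0 < \<eta>" using \<eta> by simp
          show "\<eta> \<le> 1/4" using \<eta> by (simp add: \<eta>0_def)
          show "\<eta> \<le> \<delta>" using \<eta> by (simp add: \<eta>0_def)
          have "\<eta> \<le> 1 / K1" using \<eta> by (simp add: \<eta>0_def)
          then show "K1 * \<eta> \<le> 1" using K1pos by (simp add: field_simps)
        qed
        interpret core d h \<Xi> chi \<eta> K1 \<delta> C
        proof unfold_locales
          show "\<forall>y t. (\<forall>j<d. \<bar>xi h \<Xi> j y\<bar> \<le> t) \<longrightarrow> (\<forall>k<h. \<bar>y k\<bar> \<le> K1 * t)"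
            using XiP[OF Xi] by (rule conjunct1)
          show "\<forall>y b. (\<forall>j<d. b j \<in> \<int> \<and> \<bar>xi h \<Xi> j y - b j\<bar> \<le> \<delta>) \<longrightarrow> (\<exists>z. \<forall>j<d. xi h \<Xi> j z = b j)"
            using XiP[OF Xi] by (rule conjunct2)
        qed (use Xi eta hyp K1pos Cpos h1 in auto)
        define CX where "CX = W / \<eta> ^ h"
        have CXe: "CX * \<eta> ^ h = W" using eta by (simp add: CX_def)
        show "\<exists>CX. 1 / K \<le> CX \<and> CX \<le> K \<and>
        (\<forall>N \<sigma>F \<sigma>G L F G r f.
           1 \<le> N \<and> 0 < \<sigma>F \<and> 0 < \<sigma>G \<and> L_ok m h c C L \<and> F_ok N h \<sigma>F KF F \<and> G_ok m \<epsilon> \<sigma>G KG G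
           \<and> (\<forall>j<d. \<bar>real_of_int (r j)\<bar> \<le> R)
           \<and> (\<forall>j<d. \<forall>n. 1 \<le> n \<and> n \<le> int N \<longrightarrow> \<bar>f j n\<bar> \<le> 1) \<longrightarrow>
           \<bar>Tcount N m d h L \<Xi> r F G f
             - 1 / (CX * \<eta> ^ h) * Tint N m d h L \<Xi> r F G (\<lambda>j. conv N (f j) chi)\<bar>
           \<le> B0 * 5 ^ (h - m) * (K1 * (KF + real h * C * KG)) * (\<eta> / \<sigma>G + \<eta> / (\<sigma>F * real N)))"
        proof (rule exI[of _ CX], intro conjI allI impI)
          have hC: "0 < real h * C" using h1 Cpos by simp
          have "(1 / (real h * C))^h \<le> CX"
          proof -
            have "(\<eta> / (real h * C))^h = (1 / (real h * C))^h * \<eta>^h" by (simp add: power_divide field_simps)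
            then have "(1 / (real h * C))^h * \<eta>^h \<le> W" using W_lower by simp
            then show ?thesis unfolding CX_def using eta by (simp add: field_simps)
          qed
          moreover have "1 / K \<le> (1 / (real h * C))^h"
          proof -
            have "(real h * C)^h \<le> K" unfolding K_def by simp
            moreover have "0 < (real h * C)^h" using hC by simp
            ultimately have "1 / K \<le> 1 / (real h * C)^h" by (simp add: frac_le)
            then show ?thesis by (simp add: power_one_over)
          qed
          ultimately show "1 / K \<le> CX" by linarith
          have "CX \<le> (2 * K1)^h"
          proof -
            have "W \<le> (2 * K1)^h * \<eta>^h" using W_upper by (simp add: power_mult_distrib mult.assoc)
            then show ?thesis unfolding CX_def using eta by (simp add: field_simps)
          qed
          moreover have "(2 * K1)^h \<le> K" unfolding K_def by simp
          ultimately show "CX \<le> K" by linarith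
          fix N :: nat and \<sigma>F \<sigma>G :: real and L :: "nat \<Rightarrow> nat \<Rightarrow> real" and F G :: "(nat \<Rightarrow> real) \<Rightarrow> real"
            and r :: "nat \<Rightarrow> int" and f :: "nat \<Rightarrow> int \<Rightarrow> real"
          assume A: "1 \<le> N \<and> 0 < \<sigma>F \<and> 0 < \<sigma>G \<and> L_ok m h c C L \<and> F_ok N h \<sigma>F KF F \<and> G_ok m \<epsilon> \<sigma>G KG G
           \<and> (\<forall>j<d. \<bar>real_of_int (r j)\<bar> \<le> R)
           \<and> (\<forall>j<d. \<forall>n. 1 \<le> n \<and> n \<le> int N \<longrightarrow> \<bar>f j n\<bar> \<le> 1)"
          have Lok: "L_ok m h c C L" using A by blast
          have LC: "\<forall>i<m. \<forall>k<h. \<bar>L i k\<bar> \<le> C" using Lok by (simp add: L_ok_def)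
          have rob: "\<forall>y t. t \<ge> 0 \<longrightarrow> (\<forall>k\<in>{..<h}. \<bar>\<Sum>i\<in>{..<m}. y i * L i k\<bar> \<le> t) \<longrightarrow> (\<forall>i\<in>{..<m}. c * \<bar>y i\<bar> \<le> t)"
            by (rule L_robust[OF Lok c])
          have N0: "real N + 1 \<ge> 0" by simp
          have LC': "\<forall>i\<in>{..<m}. \<forall>k\<in>{..<h}. \<bar>L i k\<bar> \<le> C" using LC by simp
          have cnt: "finite {n \<in> ibox {..<h} (real N + 1). \<forall>i\<in>{..<m}. \<bar>\<Sum>k\<in>{..<h}. L i k * real_of_int (n k)\<bar> \<le> \<epsilon> + real h * C}
            \<and> real (card {n \<in> ibox {..<h} (real N + 1). \<forall>i\<in>{..<m}. \<bar>\<Sum>k\<in>{..<h}. L i k * real_of_int (n k)\<bar> \<le> \<epsilon> + real h * C})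
              \<le> B0 * (2 * (real N + 1) + 1) ^ (card {..<h} - card {..<m})"
            using CNT[THEN spec[of _ "{..<m}"], THEN spec[of _ "{..<h}"], THEN spec[of _ L], THEN spec[of _ "real N + 1"],
              THEN mp, THEN mp, THEN mp, THEN mp, THEN mp, THEN mp, OF _ _ _ N0 LC' rob] by simp
          have "\<bar>Tcount N m d h L \<Xi> r F G f - 1 / W * Tint N m d h L \<Xi> r F G (\<lambda>j. conv N (f j) chi)\<bar>
             \<le> B0 * 5 ^ (h - m) * (K1 * (KF + real h * C * KG)) * (\<eta> / \<sigma>G + \<eta> / (\<sigma>F * real N))"
            using A by (intro estimate[OF _ _ _ KF KG _ _ LC _ B00 cnt]) auto
          then show "\<bar>Tcount N m d h L \<Xi> r F G f - 1 / (CX * \<eta> ^ h) * Tint N m d h L \<Xi> r F G (\<lambda>j. conv N (f j) chi)\<bar>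
             \<le> B0 * 5 ^ (h - m) * (K1 * (KF + real h * C * KG)) * (\<eta> / \<sigma>G + \<eta> / (\<sigma>F * real N))"
            unfolding CXe .
        qed
      qed
    qed
  qed
qed


end
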